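(* Let $\mathcal C$ be an $A_\infty$-category and $\mathcal B\subset\mathcal C$ a full $A_\infty$-subcategory. With the notation of the context, for $n\ge2$ the maps $\bar b_n$ satisfy $\bar b_n=\mu^{(n)}b-(1\otimes\mu^{(n-1)}b)\mu-(\mu^{(n-1)}b\otimes1)\mu+(1\otimes\mu^{(n-2)}b\otimes1)\mu^{(3)}$ on $(T^+s\mathcal C)^{\otimes n}$ (with $\mu^{(0)}=0$). The family $(\bar b_n)_{n\ge1}$ satisfies the $A_\infty$-equations $\sum_{r+n+t=k}(1^{\otimes r}\otimes\bar b_n\otimes1^{\otimes t})\bar b_{r+1+t}=0$, so it makes the desuspension $\overline{\mathcal C}=s^{-1}T^+s\mathcal C$ into an $A_\infty$-category. Moreover each $\bar b_n$ maps $(s\mathsf D(\mathcal C|\mathcal B))^{\otimes n}$ into $s\mathsf D(\mathcal C|\mathcal B)$, so the restrictions make $\mathsf D(\mathcal C|\mathcal B)$ an $A_\infty$-category.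
   Context: Throughout, $\Bbbk$ is a commutative ring, $\otimes=\otimes_\Bbbk$, the Koszul sign rule $(x\otimes y)(f\otimes g)=(-1)^{\deg y\cdot\deg f}xf\otimes yg$ is used, maps are written to the right of their arguments and $fg$ means "first $f$, then $g$". A graded quiver $\mathcal A$ is a class $\mathrm{Ob}\,\mathcal A$ with graded $\Bbbk$-modules $\mathcal A(X,Y)$; its suspension $s\mathcal A$ has $(s\mathcal A)^d(X,Y)=\mathcal A^{d+1}(X,Y)$. Put $T^ns\mathcal A(X,Y)=\bigoplus_{X_1,\dots,X_{n-1}}s\mathcal A(X,X_1)\otimes\cdots\otimes s\mathcal A(X_{n-1},Y)$. An $A_\infty$-category is a graded quiver with degree 1 maps $b_n:T^ns\mathcal A(X,Y)\to s\mathcal A(X,Y)$, $n\ge1$, such that $\sum_{r+n+t=k}(1^{\otimes r}\otimes b_n\otimes1^{\otimes t})b_{r+1+t}=0$ for all $k\ge1$. A full $A_\infty$-subcategory $\mathcal B\subset\mathcal C$ has $\mathrm{Ob}\,\mathcal B\subset\mathrm{Ob}\,\mathcal C$, $\mathcal B(X,Y)=\mathcal C(X,Y)$ and the same operations. Let $T^+s\mathcal C$ be the graded quiver with objects $\mathrm{Ob}\,\mathcal C$ and $T^+s\mathcal C(X,Y)=\bigoplus_{n\ge1}T^ns\mathcal C(X,Y)$; let $\mu^{(n)}:(T^+s\mathcal C)^{\otimes n}\to T^+s\mathcal C$ be the $n$-fold concatenation of tensor words ($\mu^{(1)}=1$, $\mu=\mu^{(2)}$, $\mu^{(0)}=0$).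 Let $b:T^+s\mathcal C\to T^+s\mathcal C$ be $\sum_{q+m+t=k}1^{\otimes q}\otimes b_m\otimes1^{\otimes t}$ on $T^ks\mathcal C$. Define degree 1 maps $\bar b_n:(T^+s\mathcal C)^{\otimes n}\to T^+s\mathcal C$ by $\bar b_1=b$ and, for $n\ge2$, on $T^ks\mathcal C\otimes(T^+s\mathcal C)^{\otimes(n-2)}\otimes T^ls\mathcal C$ by $\bar b_n=\mu^{(n)}\sum 1^{\otimes q}\otimes b_m\otimes1^{\otimes t}$, the sum over $m\ge1$, $0\le q<k$, $0\le t<l$ with $q+m+t$ equal to the total length of the concatenated word. The graded quiver $\mathsf D(\mathcal C|\mathcal B)$ has objects $\mathrm{Ob}\,\mathcal C$ and $s\mathsf D(\mathcal C|\mathcal B)(X,Y)$ equal to the direct summand $\bigoplus_{n\ge1}\bigoplus_{C_1,\dots,C_{n-1}\in\mathrm{Ob}\,\mathcal B}s\mathcal C(X,C_1)\otimes s\mathcal C(C_1,C_2)\otimes\cdots\otimes s\mathcal C(C_{n-1},Y)$ of $T^+s\mathcal C(X,Y)$ (for $n=1$ the summand $s\mathcal C(X,Y)$). *)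

theory Defs
  imports Main "HOL.Modules"
begin

text \<open>
The suspended hom-modules are given by their homogeneous
components: S X Y d is the submodule (sC)^d(X,Y) of a common k-module 'm with scalar
multiplication sm. A homogeneous entry of a tensor word is a tuple (X, Y, d, x) with
x in S X Y d. A word is a nonempty composable list of entries; it stands for the pure tensor
x1 (x) ... (x) xn in T^n sC(X,Y). Elements of T^+ sC are represented by formal k-linear
combinations of words (functions word => k with finite support); two such represent the same
element of T^+ sC iff their difference lies in tnull, the submodule generated by the
multilinearity relations (so free module modulo tnull is the graded tensor quiver T^+ sC).
\<close>

type_synonym ('o, 'm) ent = "'o \<times> 'o \<times> int \<times> 'm"
type_synonym ('o, 'm) word = "('o, 'm) ent list"

definition esrc :: "('o, 'm) ent \<Rightarrow> 'o" where "esrc e = fst e"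
definition etgt :: "('o, 'm) ent \<Rightarrow> 'o" where "etgt e = fst (snd e)"
definition edeg :: "('o, 'm) ent \<Rightarrow> int" where "edeg e = fst (snd (snd e))"
definition eelt :: "('o, 'm) ent \<Rightarrow> 'm" where "eelt e = snd (snd (snd e))"

definition degw :: "('o, 'm) word \<Rightarrow> int" where
  "degw w = sum_list (map edeg w)"

definition wf_word :: "'o set \<Rightarrow> ('o \<Rightarrow> 'o \<Rightarrow> int \<Rightarrow> 'm set) \<Rightarrow> ('o, 'm) word \<Rightarrow> bool" where
  "wf_word Ob S w \<longleftrightarrow> w \<noteq> [] \<and>
     (\<forall>e\<in>set w. esrc e \<in> Ob \<and> etgt e \<in> Ob \<and> eelt e \<in> S (esrc e) (etgt e) (edeg e)) \<and>
     (\<forall>i. Suc i < length w \<longrightarrow> etgt (w ! i) = esrc (w ! Suc i))"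

definition ksign :: "int \<Rightarrow> 'k::comm_ring_1" where
  "ksign d = (if even d then 1 else - 1)"

definition bapp :: "(('o, 'm) word \<Rightarrow> 'm) \<Rightarrow> ('o, 'm) word \<Rightarrow> ('o, 'm) ent" where
  "bapp b w = (esrc (hd w), etgt (last w), degw w + 1, b w)"

definition ins_b :: "(('o, 'm) word \<Rightarrow> 'm) \<Rightarrow> nat \<Rightarrow> nat \<Rightarrow> ('o, 'm) word \<Rightarrow> ('o, 'm) word" where
  "ins_b b q m w = take q w @ [bapp b (take m (drop q w))] @ drop (q + m) w"

text \<open>A_infinity-category structure: module data, degree-1 multilinear b_n (n = word length),
  and the A_infinity equations evaluated on pure tensors of homogeneous elements
  (with the Koszul sign of (1^r (x) b_n (x) 1^t)).\<close>
definition ainf_cat :: "'o set \<Rightarrow> ('o \<Rightarrow> 'o \<Rightarrow> int \<Rightarrow> 'm::ab_group_add set)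
     \<Rightarrow> ('k::comm_ring_1 \<Rightarrow> 'm \<Rightarrow> 'm) \<Rightarrow> (('o, 'm) word \<Rightarrow> 'm) \<Rightarrow> bool" where
  "ainf_cat Ob S sm b \<longleftrightarrow>
     module sm \<and>
     (\<forall>X Y d. 0 \<in> S X Y d \<and> (\<forall>x\<in>S X Y d. \<forall>y\<in>S X Y d. x + y \<in> S X Y d) \<and> (\<forall>c. \<forall>x\<in>S X Y d. sm c x \<in> S X Y d)) \<and>
     (\<forall>w. wf_word Ob S w \<longrightarrow> b w \<in> S (esrc (hd w)) (etgt (last w)) (degw w + 1)) \<and>
     (\<forall>u v X Y d x y. wf_word Ob S (u @ [(X, Y, d, x)] @ v) \<longrightarrow> wf_word Ob S (u @ [(X, Y, d, y)] @ v) \<longrightarrow>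
        b (u @ [(X, Y, d, x + y)] @ v) = b (u @ [(X, Y, d, x)] @ v) + b (u @ [(X, Y, d, y)] @ v)) \<and>
     (\<forall>u v X Y d x c. wf_word Ob S (u @ [(X, Y, d, x)] @ v) \<longrightarrow>
        b (u @ [(X, Y, d, sm c x)] @ v) = sm c (b (u @ [(X, Y, d, x)] @ v))) \<and>
     (\<forall>w. wf_word Ob S w \<longrightarrow>
        (\<Sum>r<length w. \<Sum>n\<in>{1..length w - r}. sm (ksign (degw (take r w))) (b (ins_b b r n w))) = 0)"

definition single :: "('o, 'm) word \<Rightarrow> ('o, 'm) word \<Rightarrow> 'k::comm_ring_1" where
  "single w = (\<lambda>v. if v = w then 1 else 0)"

inductive_set tnull :: "'o set \<Rightarrow> ('o \<Rightarrow> 'o \<Rightarrow> int \<Rightarrow> 'm::ab_group_add set)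
     \<Rightarrow> ('k::comm_ring_1 \<Rightarrow> 'm \<Rightarrow> 'm) \<Rightarrow> (('o, 'm) word \<Rightarrow> 'k) set"
  for Ob S sm where
  zero: "(\<lambda>_. 0) \<in> tnull Ob S sm"
| add: "f \<in> tnull Ob S sm \<Longrightarrow> g \<in> tnull Ob S sm \<Longrightarrow> (\<lambda>v. f v + g v) \<in> tnull Ob S sm"
| smul: "f \<in> tnull Ob S sm \<Longrightarrow> (\<lambda>v. c * f v) \<in> tnull Ob S sm"
| gen_add: "wf_word Ob S (u @ [(X, Y, d, x)] @ w) \<Longrightarrow> wf_word Ob S (u @ [(X, Y, d, y)] @ w) \<Longrightarrow>
     (\<lambda>v. single (u @ [(X, Y, d, x + y)] @ w) v - single (u @ [(X, Y, d, x)] @ w) v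
          - single (u @ [(X, Y, d, y)] @ w) v) \<in> tnull Ob S sm"
| gen_smul: "wf_word Ob S (u @ [(X, Y, d, x)] @ w) \<Longrightarrow>
     (\<lambda>v. single (u @ [(X, Y, d, sm c x)] @ w) v - c * single (u @ [(X, Y, d, x)] @ w) v) \<in> tnull Ob S sm"

text \<open>A tuple ws = [w_1,...,w_n] of words stands for the pure tensor w_1 (x) ... (x) w_n in
  (T^+ sC)^{(x) n}; it must be composable.\<close>
definition composable :: "'o set \<Rightarrow> ('o \<Rightarrow> 'o \<Rightarrow> int \<Rightarrow> 'm set) \<Rightarrow> ('o, 'm) word list \<Rightarrow> bool" where
  "composable Ob S ws \<longleftrightarrow> ws \<noteq> [] \<and> (\<forall>w\<in>set ws. wf_word Ob S w) \<and>
     (\<forall>i. Suc i < length ws \<longrightarrow> etgt (last (ws ! i)) = esrc (hd (ws ! Suc i)))"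

text \<open>The maps bar b_n on pure tensors: bar b_1 = b (sum over all blocks);
  for n \<ge> 2 only blocks with q < k (start inside w_1) and t < l (end inside w_n).\<close>
definition bbar :: "(('o, 'm) word \<Rightarrow> 'm) \<Rightarrow> ('o, 'm) word list \<Rightarrow> ('o, 'm) word \<Rightarrow> 'k::comm_ring_1" where
  "bbar b ws = (\<lambda>v.
     let W = concat ws; L = length W; k = length (hd ws); l = length (last ws) in
     if ws = [] then 0
     else if length ws = 1 then
       (\<Sum>q<L. \<Sum>m\<in>{1..L - q}. if v = ins_b b q m W then ksign (degw (take q W)) else 0)
     else
       (\<Sum>q<k. \<Sum>m\<in>{m. 1 \<le> m \<and> q + m \<le> L \<and> L - (q + m) < l}.
          if v = ins_b b q m W then ksign (degw (take q W)) else 0))"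

text \<open>u (x) F (x) w for a formal combination F, concatenated into T^+ sC (linear in F).\<close>
definition embed :: "('o, 'm) word \<Rightarrow> (('o, 'm) word \<Rightarrow> 'k::comm_ring_1) \<Rightarrow> ('o, 'm) word
     \<Rightarrow> ('o, 'm) word \<Rightarrow> 'k" where
  "embed u F w = (\<lambda>v. \<Sum>x\<in>{x. F x \<noteq> 0}. F x * single (u @ x @ w) v)"

definition bbar_slot :: "(('o, 'm) word \<Rightarrow> 'm) \<Rightarrow> ('o, 'm) word list \<Rightarrow> (('o, 'm) word \<Rightarrow> 'k::comm_ring_1)
     \<Rightarrow> ('o, 'm) word list \<Rightarrow> ('o, 'm) word \<Rightarrow> 'k" where
  "bbar_slot b us F ws = (\<lambda>v. \<Sum>x\<in>{x. F x \<noteq> 0}. F x * bbar b (us @ [x] @ ws) v)"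

text \<open>Words of sD(C|B): all intermediate objects C_1..C_{n-1} lie in B.\<close>
definition Dword :: "'o set \<Rightarrow> ('o, 'm) word \<Rightarrow> bool" where
  "Dword B w \<longleftrightarrow> set (map etgt (butlast w)) \<subseteq> B"

end

theory Submission
  imports Defs
begin

lemma ksign_add: "(ksign (a + c) :: 'k::comm_ring_1) = ksign a * ksign c"
  by (auto simp: ksign_def)

lemma ksign_sq: "(ksign a :: 'k::comm_ring_1) * ksign a = 1"
  by (auto simp: ksign_def)

lemma ksign_plus1: "(ksign (a + 1) :: 'k::comm_ring_1) = - ksign a"
  by (auto simp: ksign_def)

lemma degw_append[simp]: "degw (u @ w) = degw u + degw w"
  by (simp add: degw_def)
lemma degw_Cons[simp]: "degw (e # w) = edeg e + degw w"
  by (simp add: degw_def)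
lemma degw_Nil[simp]: "degw [] = 0"
  by (simp add: degw_def)

lemma tnull_cong: "f \<in> tnull Ob S sm \<Longrightarrow> (\<And>v. f v = g v) \<Longrightarrow> g \<in> tnull Ob S sm"
proof -
  assume "f \<in> tnull Ob S sm" "\<And>v. f v = g v"
  then have "f = g" by auto
  then show ?thesis using \<open>f \<in> tnull Ob S sm\<close> by simp
qed

lemma tnull_zero': "(\<And>v. f v = 0) \<Longrightarrow> f \<in> tnull Ob S sm"
  by (rule tnull_cong[OF tnull.zero]) simp

lemma tnull_neg: "f \<in> tnull Ob S sm \<Longrightarrow> (\<lambda>v. - f v) \<in> tnull Ob S sm"
  by (rule tnull_cong[OF tnull.smul[where c="-1"]]) auto

lemma tnull_diff: "f \<in> tnull Ob S sm \<Longrightarrow> g \<in> tnull Ob S sm \<Longrightarrow> (\<lambda>v. f v - g v) \<in> tnull Ob S sm"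
  by (rule tnull_cong[OF tnull.add[OF _ tnull_neg]]) auto

lemma tnull_sum: "finite I \<Longrightarrow> (\<And>i. i \<in> I \<Longrightarrow> f i \<in> tnull Ob S sm) \<Longrightarrow> (\<lambda>v. \<Sum>i\<in>I. f i v) \<in> tnull Ob S sm"
proof (induction I rule: finite_induct)
  case empty
  then show ?case by (intro tnull_zero') simp
next
  case (insert x F)
  have "(\<lambda>v. f x v + (\<Sum>i\<in>F. f i v)) \<in> tnull Ob S sm"
    by (rule tnull.add) (use insert in auto)
  then show ?case by (rule tnull_cong) (use insert in simp)
qed

definition blk :: "nat \<Rightarrow> (nat \<times> nat) set" where
  "blk L = {(q, m). q < L \<and> 1 \<le> m \<and> q + m \<le> L}"

lemma finite_blk[simp]: "finite (blk L)"
  by (rule finite_subset[of _ "{..<L} \<times> {..L}"]) (auto simp: blk_def)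

lemma sum_blk: "(\<Sum>q<L. \<Sum>m\<in>{1..L - q}. f q m) = (\<Sum>(q,m)\<in>blk L. f q m)"
proof -
  have "blk L = Sigma {..<L} (\<lambda>q. {1..L-q})" by (auto simp: blk_def)
  then show ?thesis by (simp add: sum.Sigma[symmetric])
qed

lemma supp_sum:
  fixes g :: "'i \<Rightarrow> 'k::comm_ring_1"
  assumes I: "finite I" and F: "\<And>x. F x = (\<Sum>i\<in>I. if x = f i then g i else 0)"
  shows "(\<Sum>x\<in>{x. F x \<noteq> 0}. F x * H x) = (\<Sum>i\<in>I. g i * H (f i))"
proof -
  have "(\<Sum>i\<in>I. g i * H (f i)) = (\<Sum>x\<in>f ` I. \<Sum>i\<in>{i\<in>I. f i = x}. g i * H (f i))"
    using I by (rule sum.image_gen)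
  also have "\<dots> = (\<Sum>x\<in>f ` I. F x * H x)"
  proof (rule sum.cong[OF refl])
    fix x assume "x \<in> f ` I"
    have "(\<Sum>i\<in>{i\<in>I. f i = x}. g i * H (f i)) = (\<Sum>i\<in>{i\<in>I. f i = x}. g i) * H x"
      by (simp add: sum_distrib_right)
    also have "(\<Sum>i\<in>{i\<in>I. f i = x}. g i) = (\<Sum>i\<in>I. if f i = x then g i else 0)"
      using I by (rule sum.inter_filter)
    also have "\<dots> = F x" unfolding F[of x] by (rule sum.cong) auto
    finally show "(\<Sum>i\<in>{i\<in>I. f i = x}. g i * H (f i)) = F x * H x" .
  qed
  also have "\<dots> = (\<Sum>x\<in>{x. F x \<noteq> 0}. F x * H x)"
  proof (rule sum.mono_neutral_right)
    show "finite (f ` I)" using I by simp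
    show "{x. F x \<noteq> 0} \<subseteq> f ` I"
    proof
      fix x assume "x \<in> {x. F x \<noteq> 0}"
      then have "(\<Sum>i\<in>I. if x = f i then g i else 0) \<noteq> 0" using F[of x] by simp
      then obtain i where "i \<in> I" "(if x = f i then g i else 0) \<noteq> 0" by (rule sum.not_neutral_contains_not_neutral)
      then show "x \<in> f ` I" by (auto split: if_splits)
    qed
    show "\<forall>i\<in>f ` I - {x. F x \<noteq> 0}. F i * H i = 0" by simp
  qed
  finally show ?thesis ..
qed

lemma ins_b_split: "ins_b b (length P) (length X) (P @ X @ T) = P @ [bapp b X] @ T"
  by (simp add: ins_b_def)

lemma ins_b_append_left: "ins_b b (length U + q) m (U @ V) = U @ ins_b b q m V"
  by (simp add: ins_b_def)

lemma ins_b_append_right: "q + m \<le> length V \<Longrightarrow> ins_b b q m (V @ Z) = ins_b b q m V @ Z"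
  by (simp add: ins_b_def)

lemma length_ins_b: "q + m \<le> length W \<Longrightarrow> 1 \<le> m \<Longrightarrow> length (ins_b b q m W) = length W - m + 1"
  by (simp add: ins_b_def)

lemma take_ins_b_le: "p \<le> q \<Longrightarrow> q \<le> length W \<Longrightarrow> take p (ins_b b q m W) = take p W"
  by (simp add: ins_b_def)

lemma edeg_bapp[simp]: "edeg (bapp b X) = degw X + 1"
  by (simp add: bapp_def edeg_def)

lemma decomp3:
  assumes "q + m \<le> length W"
  shows "W = take q W @ take m (drop q W) @ drop (q + m) W"
    and "length (take q W) = q" and "length (take m (drop q W)) = m"
proof -
  have "drop q W = take m (drop q W) @ drop m (drop q W)" by (rule append_take_drop_id[symmetric])
  also have "drop m (drop q W) = drop (q + m) W" by (simp add: add.commute)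
  finally have "drop q W = take m (drop q W) @ drop (q + m) W" .
  then show "W = take q W @ take m (drop q W) @ drop (q + m) W"
    by (metis append_take_drop_id)
  show "length (take q W) = q" "length (take m (drop q W)) = m" using assms by simp_all
qed

lemma degw_take_ins_b_gt:
  assumes "q < p" "q + m \<le> length W" "1 \<le> m"
  shows "degw (take p (ins_b b q m W)) = degw (take (p + m - 1) W) + 1"
proof -
  define P X T where "P = take q W" "X = take m (drop q W)" "T = drop (q + m) W"
  have W: "W = P @ X @ T" and lP: "length P = q" and lX: "length X = m"
    using decomp3[OF assms(2)] by (simp_all add: P_X_T_def)
  have "ins_b b q m W = P @ [bapp b X] @ T" using ins_b_split[of b P X T] W lP lX by simp
  moreover have "take p (P @ [bapp b X] @ T) = P @ [bapp b X] @ take (p - q - 1) T"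
    using assms lP by (simp add: take_Cons')
  ultimately have "take p (ins_b b q m W) = P @ [bapp b X] @ take (p - q - 1) T" by simp
  moreover have "take (p + m - 1) W = P @ X @ take (p - q - 1) T"
    using W lP lX assms by (simp add: take_append)
  ultimately show ?thesis by simp
qed

lemma shift_sum:
  assumes "a + len \<le> T"
  shows "(\<Sum>(q,m)\<in>blk len. h (q + a) m)
       = (\<Sum>(q,m)\<in>blk T. if a \<le> q \<and> q + m \<le> a + len then h q m else 0)"
proof -
  have "(\<Sum>(q,m)\<in>blk T. if a \<le> q \<and> q + m \<le> a + len then h q m else 0)
      = (\<Sum>(q,m)\<in>{(q,m)\<in>blk T. a \<le> q \<and> q + m \<le> a + len}. h q m)"
    by (simp add: sum.inter_filter case_prod_unfold)
  also have "\<dots> = (\<Sum>(q,m)\<in>blk len. h (q + a) m)"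
    apply (rule sum.reindex_bij_witness[where i="\<lambda>(q,m). (q + a, m)" and j="\<lambda>(q,m). (q - a, m)"])
    using assms by (auto simp: blk_def)
  finally show ?thesis ..
qed

lemma ins_b_commute:
  assumes "q1 < q2" "q2 + m2 \<le> length W - m1 + 1" "q1 + m1 \<le> length W" "1 \<le> m1" "1 \<le> m2"
  shows "ins_b b q2 m2 (ins_b b q1 m1 W) = ins_b b q1 m1 (ins_b b (q2 + m1 - 1) m2 W)"
proof -
  define P X R Y T where "P = take q1 W" "X = take m1 (drop q1 W)"
    "R = take (q2 - q1 - 1) (drop (q1 + m1) W)"
    "Y = take m2 (drop (q2 + m1 - 1) W)" "T = drop (q2 + m1 - 1 + m2) W"
  have W: "W = P @ X @ R @ Y @ T"
  proof -
    have "W = take q1 W @ take m1 (drop q1 W) @ drop (q1 + m1) W"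
      using decomp3(1)[OF assms(3)] .
    moreover have "drop (q1 + m1) W = R @ Y @ T"
    proof -
      have e: "q1 + m1 + (q2 - q1 - 1) = q2 + m1 - 1" using assms by simp
      have "drop (q1 + m1) W = R @ drop (q2 - q1 - 1) (drop (q1 + m1) W)"
        unfolding P_X_R_Y_T_def by (rule append_take_drop_id[symmetric])
      also have "drop (q2 - q1 - 1) (drop (q1 + m1) W) = drop (q2 + m1 - 1) W"
        using e by (simp only: drop_drop add.commute)
      finally have d1: "drop (q1 + m1) W = R @ drop (q2 + m1 - 1) W" .
      have d2: "drop (q2 + m1 - 1) W = Y @ drop m2 (drop (q2 + m1 - 1) W)"
        unfolding P_X_R_Y_T_def by (rule append_take_drop_id[symmetric])
      have d3: "drop m2 (drop (q2 + m1 - 1) W) = T"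
        unfolding P_X_R_Y_T_def by (simp only: drop_drop add.commute)
      show ?thesis using d1[unfolded d2[unfolded d3]] .
    qed
    ultimately show ?thesis by (simp only: P_X_R_Y_T_def(1,2))
  qed
  have lP: "length P = q1" and lX: "length X = m1" and lR: "length R = q2 - q1 - 1"
    and lY: "length Y = m2"
    using assms by (simp_all add: P_X_R_Y_T_def)
  have e1: "length (P @ [bapp b X] @ R) = q2" using lP lR assms by simp
  have e2: "length (P @ X @ R) = q2 + m1 - 1" using lP lX lR assms by simp
  have "ins_b b q1 m1 W = P @ [bapp b X] @ (R @ Y @ T)"
    using ins_b_split[of b P X "R @ Y @ T"] unfolding W lP lX .
  also have "\<dots> = (P @ [bapp b X] @ R) @ Y @ T" by simp
  also have "ins_b b q2 m2 \<dots> = (P @ [bapp b X] @ R) @ [bapp b Y] @ T"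
    using ins_b_split[of b "P @ [bapp b X] @ R" Y T] unfolding e1 lY .
  finally have 1: "ins_b b q2 m2 (ins_b b q1 m1 W) = P @ [bapp b X] @ R @ [bapp b Y] @ T" by simp
  have "W = (P @ X @ R) @ Y @ T" using W by simp
  then have "ins_b b (q2 + m1 - 1) m2 W = (P @ X @ R) @ [bapp b Y] @ T"
    using ins_b_split[of b "P @ X @ R" Y T] unfolding e2 lY by simp
  also have "\<dots> = P @ X @ (R @ [bapp b Y] @ T)" by simp
  also have "ins_b b q1 m1 \<dots> = P @ [bapp b X] @ (R @ [bapp b Y] @ T)"
    using ins_b_split[of b P X "R @ [bapp b Y] @ T"] unfolding lP lX .
  finally show ?thesis using 1 by simp
qed

lemma ins_b_nested:
  assumes "i + m \<le> M" "Q + M \<le> length W" "1 \<le> m"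
  shows "ins_b b Q (M - m + 1) (ins_b b (Q + i) m W)
       = take Q W @ [bapp b (ins_b b i m (take M (drop Q W)))] @ drop (Q + M) W"
proof -
  define J where "J = take M (drop Q W)"
  define P T where "P = take Q W" "T = drop (Q + M) W"
  define X1 Xm X2 where "X1 = take i J" "Xm = take m (drop i J)" "X2 = drop (i + m) J"
  have lJ: "length J = M" using assms by (simp add: J_def)
  have W: "W = P @ J @ T" using decomp3(1)[OF assms(2)] by (simp add: J_def P_T_def)
  have J: "J = X1 @ Xm @ X2" using decomp3(1)[of i m J] lJ assms by (simp add: X1_Xm_X2_def)
  have lP: "length P = Q" and l1: "length X1 = i" and lm: "length Xm = m"
    and l2: "length X2 = M - i - m"
    using assms lJ by (simp_all add: P_T_def X1_Xm_X2_def)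
  have "ins_b b (Q + i) m W = (P @ X1) @ [bapp b Xm] @ (X2 @ T)"
    using ins_b_split[of b "P @ X1" Xm "X2 @ T"] W J lP l1 lm by simp
  also have "\<dots> = P @ (X1 @ [bapp b Xm] @ X2) @ T" by simp
  finally have 1: "ins_b b (Q + i) m W = P @ (X1 @ [bapp b Xm] @ X2) @ T" .
  have "ins_b b i m J = X1 @ [bapp b Xm] @ X2"
    using ins_b_split[of b X1 Xm X2] J l1 lm by simp
  moreover have "length (X1 @ [bapp b Xm] @ X2) = M - m + 1" using l1 lm l2 assms by simp
  ultimately show ?thesis
    using 1 ins_b_split[of b P "X1 @ [bapp b Xm] @ X2" T] lP
    by (simp add: J_def P_T_def)
qed

lemma length_hd_concat: "ws \<noteq> [] \<Longrightarrow> length (hd ws) \<le> length (concat ws)"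
  by (cases ws) auto

lemma bbar_eq:
  assumes ws: "ws \<noteq> []"
  shows "bbar b ws v = (\<Sum>(q,m)\<in>blk (length (concat ws)).
     if q < length (hd ws) \<and> length (concat ws) - length (last ws) < q + m \<and> v = ins_b b q m (concat ws)
     then ksign (degw (take q (concat ws))) else 0)"
proof -
  define W where "W = concat ws"
  define L where "L = length W"
  define k where "k = length (hd ws)"
  define l where "l = length (last ws)"
  have kL: "k \<le> L" using length_hd_concat[OF ws] by (simp add: k_def L_def W_def)
  show ?thesis
  proof (cases "length ws = 1")
    case True
    then obtain w where ws1: "ws = [w]" by (cases ws) auto
    have "bbar b ws v = (\<Sum>q<L. \<Sum>m\<in>{1..L - q}. if v = ins_b b q m W then ksign (degw (take q W)) else 0)"
      unfolding bbar_def Let_def W_def L_def using ws1 by simp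
    also have "\<dots> = (\<Sum>(q,m)\<in>blk L. if v = ins_b b q m W then ksign (degw (take q W)) else 0)"
      by (rule sum_blk)
    also have "\<dots> = (\<Sum>(q,m)\<in>blk L.
       if q < length (hd ws) \<and> L - length (last ws) < q + m \<and> v = ins_b b q m W
       then ksign (degw (take q W)) else 0)"
      by (rule sum.cong) (auto simp: blk_def ws1 L_def W_def)
    finally show ?thesis by (simp only: W_def L_def)
  next
    case False
    have "bbar b ws v = (\<Sum>q<k. \<Sum>m\<in>{m. 1 \<le> m \<and> q + m \<le> L \<and> L - (q + m) < l}.
            if v = ins_b b q m W then ksign (degw (take q W)) else 0)"
      unfolding bbar_def Let_def W_def L_def k_def l_def using ws False by simp
    also have "\<dots> = (\<Sum>(q,m)\<in>Sigma {..<k} (\<lambda>q. {m. 1 \<le> m \<and> q + m \<le> L \<and> L - (q + m) < l}).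
            if v = ins_b b q m W then ksign (degw (take q W)) else 0)"
      by (rule sum.Sigma) (auto intro: finite_subset[of _ "{..L}"])
    also have "Sigma {..<k} (\<lambda>q. {m. 1 \<le> m \<and> q + m \<le> L \<and> L - (q + m) < l})
       = {x \<in> blk L. fst x < k \<and> L - l < fst x + snd x}"
      using kL by (auto simp: blk_def)
    also have "(\<Sum>(q,m)\<in>{x \<in> blk L. fst x < k \<and> L - l < fst x + snd x}.
            if v = ins_b b q m W then ksign (degw (take q W)) else 0)
       = (\<Sum>(q,m)\<in>blk L. if q < k \<and> L - l < q + m \<and> v = ins_b b q m W
            then ksign (degw (take q W)) else 0)"
      by (simp add: sum.inter_filter case_prod_unfold) (rule sum.cong, auto)
    finally show ?thesis by (simp only: W_def L_def k_def l_def)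
  qed
qed

lemma bbar_single: "bbar b [V] v = (\<Sum>(q,m)\<in>blk (length V).
     if v = ins_b b q m V then ksign (degw (take q V)) else 0)"
  by (subst bbar_eq) (auto simp: blk_def intro!: sum.cong)

lemma embed_bbar1: "embed u (bbar b [V]) w v = (\<Sum>(q,m)\<in>blk (length V).
     if v = u @ ins_b b q m V @ w then ksign (degw (take q V)) else (0::'k::comm_ring_1))"
proof -
  have "embed u (bbar b [V]) w v = (\<Sum>i\<in>blk (length V). ksign (degw (take (fst i) V)) * single (u @ ins_b b (fst i) (snd i) V @ w) v)"
    unfolding embed_def by (rule supp_sum) (auto simp: bbar_single case_prod_unfold)
  also have "\<dots> = (\<Sum>(q,m)\<in>blk (length V).
     if v = u @ ins_b b q m V @ w then ksign (degw (take q V)) else 0)"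
    by (rule sum.cong) (auto simp: single_def)
  finally show ?thesis .
qed

lemma embed_shift:
  "(ksign (degw U) :: 'k::comm_ring_1) * embed U (bbar b [V]) Z v
   = (\<Sum>(q,m)\<in>blk (length (U @ V @ Z)).
       if length U \<le> q \<and> q + m \<le> length U + length V \<and> v = ins_b b q m (U @ V @ Z)
       then ksign (degw (take q (U @ V @ Z))) else 0)"
proof -
  let ?W = "U @ V @ Z"
  have "(ksign (degw U) :: 'k) * embed U (bbar b [V]) Z v
     = (\<Sum>(q,m)\<in>blk (length V). ksign (degw U) * (if v = U @ ins_b b q m V @ Z then ksign (degw (take q V)) else 0))"
    by (simp add: embed_bbar1 sum_distrib_left case_prod_unfold)
  also have "\<dots> = (\<Sum>(q,m)\<in>blk (length V). (\<lambda>q m. if v = ins_b b q m ?W then ksign (degw (take q ?W)) else 0) (q + length U) m)"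
  proof (rule sum.cong[OF refl], clarify)
    fix q m assume qm: "(q, m) \<in> blk (length V)"
    then have "U @ ins_b b q m V @ Z = ins_b b (q + length U) m ?W"
      using ins_b_append_left[of b U q m "V @ Z"] ins_b_append_right[of q m V b Z]
      by (simp add: blk_def add.commute)
    moreover have "take (q + length U) ?W = U @ take q V" using qm by (simp add: blk_def)
    ultimately show "ksign (degw U) * (if v = U @ ins_b b q m V @ Z then ksign (degw (take q V)) else 0)
      = (if v = ins_b b (q + length U) m ?W then ksign (degw (take (q + length U) ?W)) else 0 :: 'k)"
      by (simp only: ksign_add degw_append) simp
  qed
  also have "\<dots> = (\<Sum>(q,m)\<in>blk (length ?W). if length U \<le> q \<and> q + m \<le> length U + length V
      then (if v = ins_b b q m ?W then ksign (degw (take q ?W)) else 0) else 0)"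
    by (rule shift_sum) simp
  also have "\<dots> = (\<Sum>(q,m)\<in>blk (length (U @ V @ Z)).
       if length U \<le> q \<and> q + m \<le> length U + length V \<and> v = ins_b b q m (U @ V @ Z)
       then ksign (degw (take q (U @ V @ Z))) else 0)"
    by (rule sum.cong) auto
  finally show ?thesis .
qed

lemma embed_bbar_empty: "embed u (bbar b [[]]) w v = (0::'k::comm_ring_1)"
  by (simp add: embed_bbar1 blk_def)

lemma part1:
  fixes ws :: "('o, 'm::ab_group_add) word list"
  assumes len: "length ws \<ge> 2"
  shows "(\<lambda>v. (bbar b ws v :: 'k::comm_ring_1)
           - (bbar b [concat ws] v
              - ksign (degw (hd ws)) * embed (hd ws) (bbar b [concat (tl ws)]) [] v
              - embed [] (bbar b [concat (butlast ws)]) (last ws) v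
              + (if length ws \<ge> 3
                 then ksign (degw (hd ws)) * embed (hd ws) (bbar b [concat (butlast (tl ws))]) (last ws) v
                 else 0))) \<in> tnull Ob S sm"
proof (rule tnull_zero')
  fix v
  obtain x ys where ws: "ws = x # ys" using len by (cases ws) auto
  have ys: "ys \<noteq> []" using len ws by auto
  define mid where "mid = concat (butlast ys)"
  define W where "W = concat ws"
  define L where "L = length W"
  define k where "k = length (hd ws)"
  define l where "l = length (last ws)"
  have e1: "concat (tl ws) = mid @ last ws" using ys ws
    by (simp add: mid_def) (metis append_butlast_last_id concat_append concat.simps append_Nil2)
  have W1: "W = hd ws @ concat (tl ws) @ []" using ws by (simp add: W_def)
  have W2: "W = [] @ concat (butlast ws) @ last ws" using ws
    by (simp add: W_def) (metis append_butlast_last_id concat_append concat.simps append_Nil2 list.distinct(1))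
  have W3: "W = hd ws @ concat (butlast (tl ws)) @ last ws" using ws e1 W1 by (simp add: mid_def)
  have lens: "L = k + length mid + l" using W3 ws by (simp add: L_def k_def l_def mid_def)
  have lt: "length (concat (tl ws)) = L - k" using W1 by (simp add: L_def k_def)
  have lb: "length (concat (butlast ws)) = L - l" using W2 by (simp add: L_def l_def)
  have lm: "length (concat (butlast (tl ws))) = length mid" using ws by (simp add: mid_def)
  have ne: "ws \<noteq> []" using ws by simp
  have A: "bbar b ws v = (\<Sum>(q,m)\<in>blk L. if q < k \<and> L - l < q + m \<and> v = ins_b b q m W
      then ksign (degw (take q W)) else 0)"
    unfolding W_def L_def k_def l_def by (rule bbar_eq[OF ne])
  have Bq: "bbar b [concat ws] v = (\<Sum>(q,m)\<in>blk L. if v = ins_b b q m W then ksign (degw (take q W)) else 0)"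
    unfolding W_def L_def by (rule bbar_single)
  have C: "ksign (degw (hd ws)) * embed (hd ws) (bbar b [concat (tl ws)]) [] v
      = (\<Sum>(q,m)\<in>blk L. if k \<le> q \<and> q + m \<le> k + (L - k) \<and> v = ins_b b q m W
          then ksign (degw (take q W)) else (0::'k))"
    using embed_shift[of "hd ws" b "concat (tl ws)" "[]" v]
    unfolding W1[symmetric] L_def[symmetric] k_def[symmetric] lt .
  have D': "ksign (degw ([]::('o,'m) word)) * embed [] (bbar b [concat (butlast ws)]) (last ws) v
      = (\<Sum>(q,m)\<in>blk L. if length ([]::('o,'m) word) \<le> q \<and> q + m \<le> length ([]::('o,'m) word) + (L - l) \<and> v = ins_b b q m W
          then ksign (degw (take q W)) else (0::'k))"
    using embed_shift[of "[]" b "concat (butlast ws)" "last ws" v]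
    unfolding W2[symmetric] L_def[symmetric] lb .
  have k1: "ksign (degw ([]::('o,'m) word)) = (1::'k)" by (simp add: ksign_def)
  have D: "embed [] (bbar b [concat (butlast ws)]) (last ws) v
      = (\<Sum>(q,m)\<in>blk L. if length ([]::('o,'m) word) \<le> q \<and> q + m \<le> length ([]::('o,'m) word) + (L - l) \<and> v = ins_b b q m W
          then ksign (degw (take q W)) else (0::'k))"
    using D' unfolding k1 mult.left_neutral .
  have E0: "ksign (degw (hd ws)) * embed (hd ws) (bbar b [concat (butlast (tl ws))]) (last ws) v
      = (\<Sum>(q,m)\<in>blk L. if k \<le> q \<and> q + m \<le> k + length mid \<and> v = ins_b b q m W
          then ksign (degw (take q W)) else (0::'k))"
    using embed_shift[of "hd ws" b "concat (butlast (tl ws))" "last ws" v]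
    unfolding W3[symmetric] L_def[symmetric] k_def[symmetric] lm .
  have E: "(if length ws \<ge> 3
                 then ksign (degw (hd ws)) * embed (hd ws) (bbar b [concat (butlast (tl ws))]) (last ws) v
                 else (0::'k))
      = (\<Sum>(q,m)\<in>blk L. if k \<le> q \<and> q + m \<le> k + length mid \<and> v = ins_b b q m W then ksign (degw (take q W)) else (0::'k))"
  proof (cases "length ws \<ge> 3")
    case True then show ?thesis using E0 by simp
  next
    case False
    then have "length ws = 2" using len by simp
    then have "butlast (tl ws) = []" using ws by (cases ys) auto
    then have "(ksign (degw (hd ws)) :: 'k) * embed (hd ws) (bbar b [concat (butlast (tl ws))]) (last ws) v = 0"
      by (simp add: embed_bbar_empty)
    then show ?thesis using E0 False by simp
  qed
  show "(bbar b ws v :: 'k) - (bbar b [concat ws] v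
              - ksign (degw (hd ws)) * embed (hd ws) (bbar b [concat (tl ws)]) [] v
              - embed [] (bbar b [concat (butlast ws)]) (last ws) v
              + (if length ws \<ge> 3
                 then ksign (degw (hd ws)) * embed (hd ws) (bbar b [concat (butlast (tl ws))]) (last ws) v
                 else 0)) = 0"
    unfolding A Bq C D E
    by (simp add: sum_subtractf[symmetric] sum.distrib[symmetric] case_prod_unfold)
       (rule sum.neutral, use lens in \<open>auto simp: blk_def\<close>)
qed

lemma Dword_iff: "Dword B v \<longleftrightarrow> (\<forall>p. Suc p < length v \<longrightarrow> etgt (v ! p) \<in> B)"
proof -
  have "set (map etgt (butlast v)) \<subseteq> B \<longleftrightarrow> (\<forall>p < length (butlast v). etgt (butlast v ! p) \<in> B)"
    unfolding set_map image_subset_iff by (rule all_set_conv_all_nth)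
  also have "\<dots> \<longleftrightarrow> (\<forall>p. Suc p < length v \<longrightarrow> etgt (v ! p) \<in> B)"
    by (auto simp: nth_butlast)
  finally show ?thesis unfolding Dword_def .
qed

lemma etgt_bapp: "X \<noteq> [] \<Longrightarrow> etgt (bapp b X) = etgt (last X)"
  by (simp add: bapp_def etgt_def)

lemma Dword_ins_b:
  assumes qm: "(q, m) \<in> blk (length W)" and k: "q < k" and l: "length W - l < q + m"
    and DW: "\<And>p. Suc p < length W \<Longrightarrow> (Suc p < k \<or> length W - l \<le> p) \<Longrightarrow> etgt (W ! p) \<in> B"
  shows "Dword B (ins_b b q m W)"
proof -
  define L where "L = length W"
  define X where "X = take m (drop q W)"
  have qm': "q < L" "1 \<le> m" "q + m \<le> L" using qm by (auto simp: blk_def L_def)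
  have v: "ins_b b q m W = take q W @ [bapp b X] @ drop (q + m) W" by (simp add: ins_b_def X_def)
  have lv: "length (ins_b b q m W) = L - m + 1" using qm' by (simp add: ins_b_def L_def)
  have lX: "length X = m" using qm' by (simp add: X_def L_def)
  show ?thesis unfolding Dword_iff
  proof (intro allI impI)
    fix p assume p: "Suc p < length (ins_b b q m W)"
    consider "p < q" | "p = q" | "q < p" by linarith
    then show "etgt (ins_b b q m W ! p) \<in> B"
    proof cases
      case 1
      then have "ins_b b q m W ! p = W ! p" unfolding v using qm' by (simp add: nth_append L_def)
      moreover have "etgt (W ! p) \<in> B" using DW[of p] 1 k qm' by (simp add: L_def)
      ultimately show ?thesis by simp
    next
      case 2
      then have "ins_b b q m W ! p = bapp b X" unfolding v using qm' by (simp add: nth_append L_def)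
      moreover have "X \<noteq> []" using lX qm' by auto
      moreover have "last X = W ! (q + m - 1)"
        using lX qm' by (simp add: X_def last_conv_nth L_def)
      moreover have "etgt (W ! (q + m - 1)) \<in> B"
      proof -
        have h1: "Suc (q + m - 1) < length W" using 2 p lv qm' by (simp add: L_def)
        have h2: "length W - l \<le> q + m - 1" using l by simp
        show ?thesis using DW[OF h1] h2 by blast
      qed
      ultimately show ?thesis by (simp add: etgt_bapp)
    next
      case 3
      then have "ins_b b q m W ! p = W ! (p + m - 1)" unfolding v using qm'
        by (simp add: nth_append L_def add.commute)
      moreover have "etgt (W ! (p + m - 1)) \<in> B"
      proof -
        have h1: "Suc (p + m - 1) < length W" using 3 p lv qm' by (simp add: L_def)
        have h2: "length W - l \<le> p + m - 1" using l 3 by simp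
        show ?thesis using DW[OF h1] h2 by blast
      qed
      ultimately show ?thesis by simp
    qed
  qed
qed

lemma part3:
  assumes cws: "composable Ob S ws" and D: "\<forall>w\<in>set ws. Dword B w"
  shows "bbar b ws v \<noteq> 0 \<Longrightarrow> Dword B v"
proof -
  assume nz: "bbar b ws v \<noteq> 0"
  have ne: "ws \<noteq> []" using cws by (simp add: composable_def)
  define W where "W = concat ws"
  define k where "k = length (hd ws)"
  define l where "l = length (last ws)"
  from nz obtain qm where qm: "qm \<in> blk (length W)"
    and c: "fst qm < k \<and> length W - l < fst qm + snd qm \<and> v = ins_b b (fst qm) (snd qm) W"
    unfolding bbar_eq[OF ne] W_def[symmetric] k_def[symmetric] l_def[symmetric]
    by (auto elim!: sum.not_neutral_contains_not_neutral split: if_splits)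
  obtain rest where W1: "W = hd ws @ rest" using ne by (cases ws) (auto simp: W_def)
  obtain front where W2: "W = front @ last ws" using ne
    by (simp add: W_def) (metis append_butlast_last_id concat_append concat.simps append_Nil2)
  have Dh: "Dword B (hd ws)" "Dword B (last ws)" using D ne by auto
  have DW: "etgt (W ! p) \<in> B" if p: "Suc p < length W" "Suc p < k \<or> length W - l \<le> p" for p
  proof (cases "Suc p < k")
    case True
    then have "W ! p = hd ws ! p" unfolding W1 by (simp add: nth_append k_def)
    then show ?thesis using Dh(1) True unfolding Dword_iff by (simp add: k_def)
  next
    case False
    then have pl: "length W - l \<le> p" using p by simp
    have lW: "length W = length front + l" using W2 by (simp add: l_def)
    have "W ! p = last ws ! (p - length front)" unfolding W2 using pl lW by (simp add: nth_append)
    moreover have "Suc (p - length front) < length (last ws)" using p pl lW by (simp add: l_def)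
    ultimately show ?thesis using Dh(2) unfolding Dword_iff by simp
  qed
  obtain q m where qmq: "qm = (q, m)" by (cases qm)
  show "Dword B v" using c qm DW Dword_ins_b[of q m W k l B b] by (simp add: qmq)
qed

fun chn :: "('o, 'm) word \<Rightarrow> bool" where
  "chn [] = True"
| "chn [e] = True"
| "chn (e1 # e2 # w) = (etgt e1 = esrc e2 \<and> chn (e2 # w))"

lemma chn_nth: "chn w \<longleftrightarrow> (\<forall>i. Suc i < length w \<longrightarrow> etgt (w ! i) = esrc (w ! Suc i))"
proof (induction w rule: chn.induct)
  case (3 e1 e2 w)
  show ?case
  proof
    assume "chn (e1 # e2 # w)"
    then show "\<forall>i. Suc i < length (e1 # e2 # w) \<longrightarrow> etgt ((e1 # e2 # w) ! i) = esrc ((e1 # e2 # w) ! Suc i)"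
      using 3 by (auto simp: nth_Cons split: nat.splits)
  next
    assume h: "\<forall>i. Suc i < length (e1 # e2 # w) \<longrightarrow> etgt ((e1 # e2 # w) ! i) = esrc ((e1 # e2 # w) ! Suc i)"
    have "etgt e1 = esrc e2" using h[rule_format, of 0] by simp
    moreover have "\<forall>i. Suc i < length (e2 # w) \<longrightarrow> etgt ((e2 # w) ! i) = esrc ((e2 # w) ! Suc i)"
      using h by (metis Suc_less_eq length_Cons nth_Cons_Suc)
    ultimately show "chn (e1 # e2 # w)" using 3 by simp
  qed
qed auto

lemma chn_append: "chn (u @ v) \<longleftrightarrow> chn u \<and> chn v \<and> (u \<noteq> [] \<and> v \<noteq> [] \<longrightarrow> etgt (last u) = esrc (hd v))"
proof (induction u rule: chn.induct)
  case 1 then show ?case by simp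
next
  case (2 e) then show ?case by (cases v) auto
next
  case (3 e1 e2 w) then show ?case by auto
qed

definition eok :: "'o set \<Rightarrow> ('o \<Rightarrow> 'o \<Rightarrow> int \<Rightarrow> 'm set) \<Rightarrow> ('o, 'm) ent \<Rightarrow> bool" where
  "eok Ob S e \<longleftrightarrow> esrc e \<in> Ob \<and> etgt e \<in> Ob \<and> eelt e \<in> S (esrc e) (etgt e) (edeg e)"

lemma wf_word_alt: "wf_word Ob S w \<longleftrightarrow> w \<noteq> [] \<and> (\<forall>e\<in>set w. eok Ob S e) \<and> chn w"
  unfolding wf_word_def eok_def chn_nth by blast

lemma wf_append: "u \<noteq> [] \<Longrightarrow> v \<noteq> [] \<Longrightarrow>
  wf_word Ob S (u @ v) \<longleftrightarrow> wf_word Ob S u \<and> wf_word Ob S v \<and> etgt (last u) = esrc (hd v)"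
  unfolding wf_word_alt chn_append by auto

lemma wf_append3: "u @ v \<noteq> [] \<Longrightarrow> X \<noteq> [] \<Longrightarrow>
  wf_word Ob S (u @ X @ v) \<longleftrightarrow> (\<forall>e\<in>set u. eok Ob S e) \<and> (\<forall>e\<in>set v. eok Ob S e) \<and> wf_word Ob S X
     \<and> chn u \<and> chn v \<and> (u \<noteq> [] \<longrightarrow> etgt (last u) = esrc (hd X)) \<and> (v \<noteq> [] \<longrightarrow> etgt (last X) = esrc (hd v))"
  unfolding wf_word_alt chn_append by (auto simp: chn_append)

lemma wf_replace:
  assumes "wf_word Ob S (u @ X @ v)" "X \<noteq> []" "wf_word Ob S Y" "esrc (hd Y) = esrc (hd X)" "etgt (last Y) = etgt (last X)"
  shows "wf_word Ob S (u @ Y @ v)"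
proof (cases "u @ v = []")
  case True then show ?thesis using assms by simp
next
  case False
  have "Y \<noteq> []" using assms(3) by (simp add: wf_word_def)
  then show ?thesis using assms False wf_append3[of u v X Ob S] wf_append3[of u v Y Ob S] by auto
qed

lemma esrc_bapp: "X \<noteq> [] \<Longrightarrow> esrc (bapp b X) = esrc (hd X)"
  by (simp add: bapp_def esrc_def)

lemma eelt_bapp[simp]: "eelt (bapp b X) = b X"
  by (simp add: bapp_def eelt_def)

lemma bapp_eq: "bapp b X = (esrc (hd X), etgt (last X), degw X + 1, b X)"
  by (simp add: bapp_def)

lemma wf_single: "wf_word Ob S [e] \<longleftrightarrow> eok Ob S e"
  by (simp add: wf_word_alt)

lemma ainf_S: assumes "ainf_cat Ob S sm b"
  shows "0 \<in> S X Y d" "x \<in> S X Y d \<Longrightarrow> y \<in> S X Y d \<Longrightarrow> x + y \<in> S X Y d"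
    "x \<in> S X Y d \<Longrightarrow> sm c x \<in> S X Y d"
    "wf_word Ob S w \<Longrightarrow> b w \<in> S (esrc (hd w)) (etgt (last w)) (degw w + 1)"
proof -
  have h: "(\<forall>X Y d. 0 \<in> S X Y d \<and> (\<forall>x\<in>S X Y d. \<forall>y\<in>S X Y d. x + y \<in> S X Y d) \<and> (\<forall>c. \<forall>x\<in>S X Y d. sm c x \<in> S X Y d))"
    and h4: "(\<forall>w. wf_word Ob S w \<longrightarrow> b w \<in> S (esrc (hd w)) (etgt (last w)) (degw w + 1))"
    using assms unfolding ainf_cat_def
    by (rule conjunct1[OF conjunct2], rule conjunct1[OF conjunct2[OF conjunct2]])
  show "0 \<in> S X Y d" using h by simp
  show "x \<in> S X Y d \<Longrightarrow> y \<in> S X Y d \<Longrightarrow> x + y \<in> S X Y d" using h by simp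
  show "x \<in> S X Y d \<Longrightarrow> sm c x \<in> S X Y d" using h by simp
  show "wf_word Ob S w \<Longrightarrow> b w \<in> S (esrc (hd w)) (etgt (last w)) (degw w + 1)" using h4 by simp
qed

lemma wf_bapp:
  assumes C: "ainf_cat Ob S sm b" and X: "wf_word Ob S X"
  shows "wf_word Ob S [bapp b X]"
proof -
  have ne: "X \<noteq> []" using X by (simp add: wf_word_def)
  have "esrc (hd X) \<in> Ob" "etgt (last X) \<in> Ob" using X ne unfolding wf_word_alt eok_def by auto
  then show ?thesis using ainf_S(4)[OF C X] ne
    by (simp add: wf_single eok_def esrc_bapp etgt_bapp)
qed

lemma wf_take_drop:
  assumes "wf_word Ob S W" "(q, m) \<in> blk (length W)"
  shows "wf_word Ob S (take m (drop q W))"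
proof -
  have W: "W = take q W @ take m (drop q W) @ drop (q + m) W" using assms(2) decomp3(1)[of q m W]
    by (simp add: blk_def)
  have ne: "take m (drop q W) \<noteq> []" using assms(2) by (auto simp: blk_def)
  show ?thesis
  proof (cases "take q W @ drop (q + m) W = []")
    case True
    then have t: "take q W = []" "drop (q + m) W = []" by simp_all
    have "W = take m (drop q W)" using W unfolding t append_Nil append_Nil2 .
    then show ?thesis using assms(1) by metis
  next
    case False
    have "wf_word Ob S (take q W @ take m (drop q W) @ drop (q + m) W)" using assms(1) by (subst (asm) W)
    then show ?thesis using wf_append3[OF False ne, of Ob S] by simp
  qed
qed

lemma wf_ins_b:
  assumes C: "ainf_cat Ob S sm b" and W: "wf_word Ob S W" and qm: "(q, m) \<in> blk (length W)"
  shows "wf_word Ob S (ins_b b q m W)"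
proof -
  define X where "X = take m (drop q W)"
  have WX: "W = take q W @ X @ drop (q + m) W" using qm decomp3(1)[of q m W]
    by (simp add: blk_def X_def)
  have ne: "X \<noteq> []" using qm by (auto simp: blk_def X_def)
  have wX: "wf_word Ob S X" unfolding X_def by (rule wf_take_drop[OF W qm])
  have "wf_word Ob S (take q W @ [bapp b X] @ drop (q + m) W)"
  proof (rule wf_replace[of Ob S "take q W" X "drop (q + m) W" "[bapp b X]"])
    show "wf_word Ob S (take q W @ X @ drop (q + m) W)" using W by (subst (asm) WX)
  qed (use ne wf_bapp[OF C wX] in \<open>auto simp: esrc_bapp etgt_bapp\<close>)
  then show ?thesis by (simp add: ins_b_def X_def)
qed

lemma degw_ins_b: "(q, m) \<in> blk (length W) \<Longrightarrow> degw (ins_b b q m W) = degw W + 1"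
proof -
  assume qm: "(q, m) \<in> blk (length W)"
  have "W = take q W @ take m (drop q W) @ drop (q + m) W" using qm decomp3(1)[of q m W]
    by (simp add: blk_def)
  then have "degw W = degw (take q W) + degw (take m (drop q W)) + degw (drop (q + m) W)"
    by (metis degw_append add.assoc)
  then show ?thesis by (simp add: ins_b_def)
qed

lemma hd_ins_b: "(q, m) \<in> blk (length W) \<Longrightarrow> esrc (hd (ins_b b q m W)) = esrc (hd W)"
proof -
  assume qm: "(q, m) \<in> blk (length W)"
  show ?thesis
  proof (cases "q = 0")
    case True
    then have "ins_b b q m W = bapp b (take m W) # drop m W" by (simp add: ins_b_def)
    moreover have "take m W \<noteq> []" "W \<noteq> []" using qm by (auto simp: blk_def)
    ultimately show ?thesis by (simp add: esrc_bapp)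
  next
    case False
    then have "take q W \<noteq> []" using qm by (auto simp: blk_def)
    then have "hd (ins_b b q m W) = hd (take q W)" by (simp add: ins_b_def)
    also have "\<dots> = hd W" using False by (simp add: hd_take)
    finally show ?thesis by simp
  qed
qed

lemma last_ins_b: "(q, m) \<in> blk (length W) \<Longrightarrow> etgt (last (ins_b b q m W)) = etgt (last W)"
proof -
  assume qm: "(q, m) \<in> blk (length W)"
  show ?thesis
  proof (cases "q + m = length W")
    case True
    then have "ins_b b q m W = take q W @ [bapp b (drop q W)]" by (simp add: ins_b_def)
    moreover have "drop q W \<noteq> []" using qm by (simp add: blk_def)
    ultimately show ?thesis by (simp add: etgt_bapp)
  next
    case False
    then have "drop (q + m) W \<noteq> []" using qm by (simp add: blk_def)
    then show ?thesis by (simp add: ins_b_def)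
  qed
qed

lemma single_zero_tnull:
  assumes C: "ainf_cat Ob S sm b" and wf: "wf_word Ob S (u @ [(X, Y, d, 0)] @ w)"
  shows "(\<lambda>v. single (u @ [(X, Y, d, 0)] @ w) v :: 'k::comm_ring_1) \<in> tnull Ob S sm"
proof -
  have "(\<lambda>v. single (u @ [(X, Y, d, 0 + 0)] @ w) v - single (u @ [(X, Y, d, 0)] @ w) v
      - single (u @ [(X, Y, d, 0)] @ w) v :: 'k) \<in> tnull Ob S sm"
    by (rule tnull.gen_add) (use wf in simp_all)
  then have "(\<lambda>v. - single (u @ [(X, Y, d, 0)] @ w) v :: 'k) \<in> tnull Ob S sm"
    by (rule tnull_cong) simp
  from tnull_neg[OF this] show ?thesis by (rule tnull_cong) simp
qed

lemma lin_comb: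
  fixes c :: "'i \<Rightarrow> 'k::comm_ring_1" and x :: "'i \<Rightarrow> 'm::ab_group_add"
  assumes C: "ainf_cat Ob S sm b" and I: "finite I" and xS: "\<And>i. i \<in> I \<Longrightarrow> x i \<in> S X Y d"
    and wf: "\<And>y. y \<in> S X Y d \<Longrightarrow> wf_word Ob S (u @ [(X, Y, d, y)] @ w)"
    and z: "(\<Sum>i\<in>I. sm (c i) (x i)) = 0"
  shows "(\<lambda>v. \<Sum>i\<in>I. if v = u @ [(X, Y, d, x i)] @ w then c i else 0) \<in> tnull Ob S sm"
proof -
  let ?e = "\<lambda>y. u @ [(X, Y, d, y)] @ w"
  have main: "(\<lambda>v. (\<Sum>i\<in>J. if v = ?e (x i) then c i else 0) - single (?e (\<Sum>i\<in>J. sm (c i) (x i))) v) \<in> tnull Ob S sm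
      \<and> (\<Sum>i\<in>J. sm (c i) (x i)) \<in> S X Y d" if "finite J" "J \<subseteq> I" for J
    using that
  proof (induction J rule: finite_induct)
    case empty
    have "(\<lambda>v. single (?e 0) v :: 'k) \<in> tnull Ob S sm"
      by (rule single_zero_tnull[OF C wf[OF ainf_S(1)[OF C]]])
    then have "(\<lambda>v. - single (?e 0) v :: 'k) \<in> tnull Ob S sm" by (rule tnull_neg)
    then show ?case using ainf_S(1)[OF C] by (auto intro: tnull_cong)
  next
    case (insert j J)
    let ?p = "sm (c j) (x j)"
    let ?q = "\<Sum>i\<in>J. sm (c i) (x i)"
    have IH: "(\<lambda>v. (\<Sum>i\<in>J. if v = ?e (x i) then c i else 0) - single (?e ?q) v) \<in> tnull Ob S sm"
      and qS: "?q \<in> S X Y d" using insert by auto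
    have xj: "x j \<in> S X Y d" using insert xS by auto
    have pS: "?p \<in> S X Y d" using ainf_S(3)[OF C xj] .
    have g1: "(\<lambda>v. single (?e (?p + ?q)) v - single (?e ?p) v - single (?e ?q) v :: 'k) \<in> tnull Ob S sm"
      by (rule tnull.gen_add) (use wf pS qS in auto)
    have g2: "(\<lambda>v. single (?e (sm (c j) (x j))) v - c j * single (?e (x j)) v) \<in> tnull Ob S sm"
      by (rule tnull.gen_smul) (use wf xj in auto)
    have "(\<lambda>v. ((\<Sum>i\<in>J. if v = ?e (x i) then c i else 0) - single (?e ?q) v)
        - (single (?e (sm (c j) (x j))) v - c j * single (?e (x j)) v)
        - (single (?e (?p + ?q)) v - single (?e ?p) v - single (?e ?q) v)) \<in> tnull Ob S sm"
      by (rule tnull_diff[OF tnull_diff[OF IH g2] g1])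
    then have "(\<lambda>v. (\<Sum>i\<in>insert j J. if v = ?e (x i) then c i else 0)
        - single (?e (\<Sum>i\<in>insert j J. sm (c i) (x i))) v) \<in> tnull Ob S sm"
      by (rule tnull_cong) (use insert in \<open>simp add: single_def\<close>)
    moreover have "(\<Sum>i\<in>insert j J. sm (c i) (x i)) \<in> S X Y d"
      using insert ainf_S(2)[OF C pS qS] by simp
    ultimately show ?case by blast
  qed
  have "(\<lambda>v. (\<Sum>i\<in>I. if v = ?e (x i) then c i else 0) - single (?e 0) v) \<in> tnull Ob S sm"
    using main[OF I order_refl] z by simp
  moreover have "(\<lambda>v. single (?e 0) v :: 'k) \<in> tnull Ob S sm"
    by (rule single_zero_tnull[OF C wf[OF ainf_S(1)[OF C]]])
  ultimately have "(\<lambda>v. ((\<Sum>i\<in>I. if v = ?e (x i) then c i else 0) - single (?e 0) v) + single (?e 0) v) \<in> tnull Ob S sm"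
    by (rule tnull.add)
  then show ?thesis by simp
qed

lemma ainf_eq: "ainf_cat Ob S sm b \<Longrightarrow> wf_word Ob S w \<Longrightarrow>
  (\<Sum>r<length w. \<Sum>n\<in>{1..length w - r}. sm (ksign (degw (take r w))) (b (ins_b b r n w))) = 0"
  unfolding ainf_cat_def
  by (drule conjunct2[OF conjunct2[OF conjunct2[OF conjunct2[OF conjunct2]]]]) blast

lemma nested_tnull:
  assumes C: "ainf_cat Ob S sm b" and W: "wf_word Ob S W" and QM: "(Q, M) \<in> blk (length W)"
  shows "(\<lambda>v. \<Sum>(i,m)\<in>blk M. if v = take Q W @ [bapp b (ins_b b i m (take M (drop Q W)))] @ drop (Q + M) W
            then ksign (degw (take i (take M (drop Q W)))) else (0::'k::comm_ring_1)) \<in> tnull Ob S sm"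
proof -
  define J where "J = take M (drop Q W)"
  define u where "u = take Q W"
  define w where "w = drop (Q + M) W"
  have WJ: "W = u @ J @ w" using QM decomp3(1)[of Q M W] by (simp add: blk_def J_def u_def w_def)
  have wJ: "wf_word Ob S J" unfolding J_def by (rule wf_take_drop[OF W QM])
  have lJ: "length J = M" using QM by (auto simp: J_def blk_def)
  have neJ: "J \<noteq> []" using wJ by (simp add: wf_word_def)
  define X where "X = esrc (hd J)"
  define Y where "Y = etgt (last J)"
  define d where "d = degw J + 2"
  have XY: "X \<in> Ob" "Y \<in> Ob" using wJ neJ unfolding wf_word_alt eok_def X_def Y_def by auto
  have ent: "bapp b (ins_b b i m J) = (X, Y, d, b (ins_b b i m J))" if "(i, m) \<in> blk M" for i m
    using that lJ by (simp add: bapp_eq hd_ins_b last_ins_b degw_ins_b X_def Y_def d_def)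
  have xS: "b (ins_b b (fst p) (snd p) J) \<in> S X Y d" if "p \<in> blk M" for p
  proof -
    obtain i m where p: "p = (i, m)" by (cases p)
    have im: "(i, m) \<in> blk (length J)" using that p lJ by simp
    have "b (ins_b b i m J) \<in> S (esrc (hd (ins_b b i m J))) (etgt (last (ins_b b i m J))) (degw (ins_b b i m J) + 1)"
      by (rule ainf_S(4)[OF C wf_ins_b[OF C wJ im]])
    then show ?thesis using im by (simp add: p hd_ins_b last_ins_b degw_ins_b X_def Y_def d_def add.commute)
  qed
  have wf: "wf_word Ob S (u @ [(X, Y, d, y)] @ w)" if "y \<in> S X Y d" for y
  proof (rule wf_replace[of Ob S u J w])
    show "wf_word Ob S (u @ J @ w)" using W by (subst (asm) WJ)
    show "wf_word Ob S [(X, Y, d, y)]" using XY that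
      by (simp add: wf_single eok_def esrc_def etgt_def edeg_def eelt_def)
  qed (use neJ in \<open>simp_all add: X_def Y_def esrc_def etgt_def\<close>)
  have z: "(\<Sum>p\<in>blk M. sm (ksign (degw (take (fst p) J))) (b (ins_b b (fst p) (snd p) J))) = 0"
    using ainf_eq[OF C wJ] unfolding lJ sum_blk by (simp add: case_prod_unfold)
  have "(\<lambda>v. \<Sum>p\<in>blk M. if v = u @ [(X, Y, d, b (ins_b b (fst p) (snd p) J))] @ w
      then ksign (degw (take (fst p) J)) else (0::'k)) \<in> tnull Ob S sm"
    by (rule lin_comb[OF C finite_blk xS wf z])
  then show ?thesis
    unfolding J_def[symmetric] u_def[symmetric] w_def[symmetric]
    by (rule tnull_cong) (auto intro!: sum.cong simp: ent)
qed

definition sw :: "(nat \<Rightarrow> nat) \<Rightarrow> nat \<Rightarrow> nat \<Rightarrow> bool" where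
  "sw c x y \<longleftrightarrow> (\<forall>j. x < c j \<longrightarrow> y < c j)"

definition Cc :: "(nat \<Rightarrow> nat) \<Rightarrow> nat \<Rightarrow> nat \<Rightarrow> nat \<Rightarrow> nat \<Rightarrow> nat \<Rightarrow> bool" where
  "Cc c N q1 m1 q2 m2 = (if q2 \<le> q1 \<and> q1 < q2 + m2 then q2 < c 1 \<and> c (N - 1) < q2 + m2 + m1 - 1
     else if q1 < q2 then q1 < c 1 \<and> sw c (q1 + m1 - 1) (q2 + m1 - 1) \<and> c (N - 1) < q2 + m2 + m1 - 1
     else q2 < c 1 \<and> c (N - 1) < q1 + m1 \<and> sw c (q2 + m2 - 1) q1)"

definition Gt :: "(('o, 'm) word \<Rightarrow> 'm) \<Rightarrow> ('o, 'm) word \<Rightarrow> (nat \<Rightarrow> nat) \<Rightarrow> nat \<Rightarrow> ('o, 'm) word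
    \<Rightarrow> (nat \<times> nat) \<times> (nat \<times> nat) \<Rightarrow> 'k::comm_ring_1" where
  "Gt b W c N v x = (case x of ((q1, m1), (q2, m2)) \<Rightarrow>
     if Cc c N q1 m1 q2 m2 \<and> v = ins_b b q2 m2 (ins_b b q1 m1 W)
     then ksign (degw (take q1 W)) * ksign (degw (take q2 (ins_b b q1 m1 W))) else 0)"

definition Dset :: "nat \<Rightarrow> ((nat \<times> nat) \<times> (nat \<times> nat)) set" where
  "Dset L = Sigma (blk L) (\<lambda>p. blk (L - snd p + 1))"

lemma finite_Dset[simp]: "finite (Dset L)"
  by (simp add: Dset_def)

lemma Dset_mem: "((q1, m1), (q2, m2)) \<in> Dset L \<longleftrightarrow>
   q1 < L \<and> 1 \<le> m1 \<and> q1 + m1 \<le> L \<and> q2 < L - m1 + 1 \<and> 1 \<le> m2 \<and> q2 + m2 \<le> L - m1 + 1"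
  by (auto simp: Dset_def blk_def)

lemma disjoint_cancel:
  fixes b :: "('o, 'm) word \<Rightarrow> 'm"
  shows "(\<Sum>x\<in>{x\<in>Dset (length W). fst (fst x) < fst (snd x)}. (Gt b W c N v x :: 'k::comm_ring_1))
       = - (\<Sum>x\<in>{x\<in>Dset (length W). snd (snd x) + fst (snd x) \<le> fst (fst x)}. Gt b W c N v x)"
proof -
  let ?L = "length W"
  have "(\<Sum>x\<in>{x\<in>Dset ?L. fst (fst x) < fst (snd x)}. (Gt b W c N v x :: 'k))
     = (\<Sum>x\<in>{x\<in>Dset ?L. snd (snd x) + fst (snd x) \<le> fst (fst x)}. - Gt b W c N v x)"
  proof (rule sum.reindex_bij_witness[where j="\<lambda>((q1, m1), (q2, m2)). ((q2 + m1 - 1, m2), (q1, m1))"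
        and i="\<lambda>((a, ma), (bq, mb)). ((bq, mb), (a - mb + 1, ma))"])
    fix x assume x: "x \<in> {x\<in>Dset ?L. fst (fst x) < fst (snd x)}"
    obtain q1 m1 q2 m2 where xe: "x = ((q1, m1), (q2, m2))" by (metis prod.exhaust)
    have h: "q1 < q2" "q1 < ?L" "1 \<le> m1" "q1 + m1 \<le> ?L" "q2 < ?L - m1 + 1" "1 \<le> m2" "q2 + m2 \<le> ?L - m1 + 1"
      using x by (auto simp: xe Dset_mem)
    show "(\<lambda>((a, ma), (bq, mb)). ((bq, mb), (a - mb + 1, ma))) ((\<lambda>((q1, m1), (q2, m2)). ((q2 + m1 - 1, m2), (q1, m1))) x) = x"
      using h by (simp add: xe)
    show "(\<lambda>((q1, m1), (q2, m2)). ((q2 + m1 - 1, m2), (q1, m1))) x \<in> {x\<in>Dset ?L. snd (snd x) + fst (snd x) \<le> fst (fst x)}"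
      using h by (simp add: xe Dset_mem, arith)
    have Cc_eq: "Cc c N (q2 + m1 - 1) m2 q1 m1 = Cc c N q1 m1 q2 m2"
      using h unfolding Cc_def by (auto simp: add.commute add.left_commute)
    have ww: "ins_b b q1 m1 (ins_b b (q2 + m1 - 1) m2 W) = ins_b b q2 m2 (ins_b b q1 m1 W)"
      using ins_b_commute[of q1 q2 m2 W m1 b] h by simp
    have s1: "take q1 (ins_b b (q2 + m1 - 1) m2 W) = take q1 W"
      using h by (intro take_ins_b_le) auto
    have s2: "degw (take q2 (ins_b b q1 m1 W)) = degw (take (q2 + m1 - 1) W) + 1"
      using h by (intro degw_take_ins_b_gt) auto
    show "- Gt b W c N v ((\<lambda>((q1, m1), (q2, m2)). ((q2 + m1 - 1, m2), (q1, m1))) x) = (Gt b W c N v x :: 'k)"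
      unfolding xe Gt_def prod.case Cc_eq ww s1 s2 ksign_plus1 by (simp add: mult.commute)
  next
    fix y assume y: "y \<in> {x\<in>Dset ?L. snd (snd x) + fst (snd x) \<le> fst (fst x)}"
    obtain a ma bq mb where ye: "y = ((a, ma), (bq, mb))" by (metis prod.exhaust)
    have h: "bq + mb \<le> a" "a < ?L" "1 \<le> ma" "a + ma \<le> ?L" "bq < ?L - ma + 1" "1 \<le> mb" "bq + mb \<le> ?L - ma + 1"
      using y by (auto simp: ye Dset_mem)
    show "(\<lambda>((q1, m1), (q2, m2)). ((q2 + m1 - 1, m2), (q1, m1))) ((\<lambda>((a, ma), (bq, mb)). ((bq, mb), (a - mb + 1, ma))) y) = y"
      using h by (simp add: ye)
    show "(\<lambda>((a, ma), (bq, mb)). ((bq, mb), (a - mb + 1, ma))) y \<in> {x\<in>Dset ?L. fst (fst x) < fst (snd x)}"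
      using h by (simp add: ye Dset_mem, arith)
  qed
  then show ?thesis by (simp add: sum_negf)
qed


definition Hn :: "(('o, 'm) word \<Rightarrow> 'm) \<Rightarrow> ('o, 'm) word \<Rightarrow> (nat \<Rightarrow> nat) \<Rightarrow> nat \<Rightarrow> ('o, 'm) word
    \<Rightarrow> (nat \<times> nat) \<times> (nat \<times> nat) \<Rightarrow> 'k::comm_ring_1" where
  "Hn b W c N v e = (case e of ((Q, M), (i, m)) \<Rightarrow>
     if Q < c 1 \<and> c (N - 1) < Q + M \<and> v = take Q W @ [bapp b (ins_b b i m (take M (drop Q W)))] @ drop (Q + M) W
     then ksign (degw (take i (take M (drop Q W)))) else 0)"

lemma nested_reindex:
  fixes b :: "('o, 'm) word \<Rightarrow> 'm"
  shows "(\<Sum>x\<in>{x\<in>Dset (length W). fst (snd x) \<le> fst (fst x) \<and> fst (fst x) < fst (snd x) + snd (snd x)}.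
            (Gt b W c N v x :: 'k::comm_ring_1))
       = (\<Sum>e\<in>Sigma (blk (length W)) (\<lambda>p. blk (snd p)). Hn b W c N v e)"
proof (rule sum.reindex_bij_witness[where j="\<lambda>((q1, m1), (q2, m2)). ((q2, m2 + m1 - 1), (q1 - q2, m1))"
        and i="\<lambda>((Q, M), (i, m)). ((Q + i, m), (Q, M - m + 1))"])
  let ?L = "length W"
  fix x assume x: "x \<in> {x\<in>Dset ?L. fst (snd x) \<le> fst (fst x) \<and> fst (fst x) < fst (snd x) + snd (snd x)}"
  obtain q1 m1 q2 m2 where xe: "x = ((q1, m1), (q2, m2))" by (metis prod.exhaust)
  have h: "q2 \<le> q1" "q1 < q2 + m2" "q1 < ?L" "1 \<le> m1" "q1 + m1 \<le> ?L" "q2 < ?L - m1 + 1" "1 \<le> m2" "q2 + m2 \<le> ?L - m1 + 1"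
    using x by (auto simp: xe Dset_mem)
  show "(\<lambda>((Q, M), (i, m)). ((Q + i, m), (Q, M - m + 1))) ((\<lambda>((q1, m1), (q2, m2)). ((q2, m2 + m1 - 1), (q1 - q2, m1))) x) = x"
    using h by (simp add: xe)
  show "(\<lambda>((q1, m1), (q2, m2)). ((q2, m2 + m1 - 1), (q1 - q2, m1))) x \<in> Sigma (blk ?L) (\<lambda>p. blk (snd p))"
    using h by (simp add: xe blk_def, arith)
  have cc: "Cc c N q1 m1 q2 m2 = (q2 < c 1 \<and> c (N - 1) < q2 + (m2 + m1 - 1))"
    using h unfolding Cc_def by auto
  have e1: "m2 + m1 - 1 - m1 + 1 = m2" and e2: "q2 + (q1 - q2) = q1" using h by auto
  have wd0: "ins_b b q2 (m2 + m1 - 1 - m1 + 1) (ins_b b (q2 + (q1 - q2)) m1 W)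
       = take q2 W @ [bapp b (ins_b b (q1 - q2) m1 (take (m2 + m1 - 1) (drop q2 W)))] @ drop (q2 + (m2 + m1 - 1)) W"
    by (rule ins_b_nested) (use h in auto)
  have wd: "ins_b b q2 m2 (ins_b b q1 m1 W)
       = take q2 W @ [bapp b (ins_b b (q1 - q2) m1 (take (m2 + m1 - 1) (drop q2 W)))] @ drop (q2 + (m2 + m1 - 1)) W"
    using wd0 unfolding e1 e2 .
  have t1: "take q2 (ins_b b q1 m1 W) = take q2 W" using h by (intro take_ins_b_le) auto
  have t2: "take q1 W = take q2 W @ take (q1 - q2) (drop q2 W)"
    using h by (metis e2 take_add)
  have t3: "take (q1 - q2) (take (m2 + m1 - 1) (drop q2 W)) = take (q1 - q2) (drop q2 W)"
    using h by (simp add: min_def)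
  have sg: "(ksign (degw (take q1 W)) :: 'k) * ksign (degw (take q2 (ins_b b q1 m1 W)))
      = ksign (degw (take (q1 - q2) (take (m2 + m1 - 1) (drop q2 W))))"
    unfolding t1 t3 t2 degw_append ksign_add by (auto simp: ksign_def)
  show "Hn b W c N v ((\<lambda>((q1, m1), (q2, m2)). ((q2, m2 + m1 - 1), (q1 - q2, m1))) x) = (Gt b W c N v x :: 'k)"
    unfolding xe Gt_def Hn_def prod.case cc wd sg by simp
next
  let ?L = "length W"
  fix y assume y: "y \<in> Sigma (blk ?L) (\<lambda>p. blk (snd p))"
  obtain Q M i m where ye: "y = ((Q, M), (i, m))" by (metis prod.exhaust)
  have h: "Q < ?L" "1 \<le> M" "Q + M \<le> ?L" "i < M" "1 \<le> m" "i + m \<le> M"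
    using y by (auto simp: ye blk_def)
  show "(\<lambda>((q1, m1), (q2, m2)). ((q2, m2 + m1 - 1), (q1 - q2, m1))) ((\<lambda>((Q, M), (i, m)). ((Q + i, m), (Q, M - m + 1))) y) = y"
    using h by (simp add: ye)
  show "(\<lambda>((Q, M), (i, m)). ((Q + i, m), (Q, M - m + 1))) y
      \<in> {x\<in>Dset ?L. fst (snd x) \<le> fst (fst x) \<and> fst (fst x) < fst (snd x) + snd (snd x)}"
    using h by (simp add: ye Dset_mem, arith)
qed

lemma G_tnull:
  fixes b :: "('o, 'm::ab_group_add) word \<Rightarrow> 'm"
  assumes C: "ainf_cat Ob S sm b" and W: "wf_word Ob S W"
  shows "(\<lambda>v. \<Sum>x\<in>Dset (length W). (Gt b W c N v x :: 'k::comm_ring_1)) \<in> tnull Ob S sm"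
proof -
  let ?L = "length W"
  let ?Pn = "\<lambda>x::(nat \<times> nat) \<times> (nat \<times> nat). fst (snd x) \<le> fst (fst x) \<and> fst (fst x) < fst (snd x) + snd (snd x)"
  let ?Pa = "\<lambda>x::(nat \<times> nat) \<times> (nat \<times> nat). fst (fst x) < fst (snd x)"
  let ?Pb = "\<lambda>x::(nat \<times> nat) \<times> (nat \<times> nat). snd (snd x) + fst (snd x) \<le> fst (fst x)"
  have split: "(\<Sum>x\<in>Dset ?L. (Gt b W c N v x :: 'k))
     = (\<Sum>x\<in>{x\<in>Dset ?L. ?Pn x}. Gt b W c N v x) + (\<Sum>x\<in>{x\<in>Dset ?L. ?Pa x}. Gt b W c N v x)
       + (\<Sum>x\<in>{x\<in>Dset ?L. ?Pb x}. Gt b W c N v x)" for v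
  proof -
    have "(\<Sum>x\<in>Dset ?L. (Gt b W c N v x :: 'k))
       = (\<Sum>x\<in>Dset ?L. (if ?Pn x then Gt b W c N v x else 0) + (if ?Pa x then Gt b W c N v x else 0)
           + (if ?Pb x then Gt b W c N v x else 0))"
      by (rule sum.cong) auto
    also have "\<dots> = (\<Sum>x\<in>Dset ?L. if ?Pn x then Gt b W c N v x else 0) + (\<Sum>x\<in>Dset ?L. if ?Pa x then Gt b W c N v x else 0)
           + (\<Sum>x\<in>Dset ?L. if ?Pb x then Gt b W c N v x else 0)"
      by (simp add: sum.distrib)
    finally show ?thesis by (simp add: sum.inter_filter)
  qed
  have red: "(\<Sum>x\<in>Dset ?L. (Gt b W c N v x :: 'k))
      = (\<Sum>QM\<in>blk ?L. if fst QM < c 1 \<and> c (N - 1) < fst QM + snd QM then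
           (\<Sum>(i,m)\<in>blk (snd QM). if v = take (fst QM) W @ [bapp b (ins_b b i m (take (snd QM) (drop (fst QM) W)))] @ drop (fst QM + snd QM) W
             then ksign (degw (take i (take (snd QM) (drop (fst QM) W)))) else 0) else 0)" for v
  proof -
    have "(\<Sum>x\<in>Dset ?L. (Gt b W c N v x :: 'k)) = (\<Sum>x\<in>{x\<in>Dset ?L. ?Pn x}. Gt b W c N v x)"
    proof -
      have dc: "(\<Sum>x\<in>{x\<in>Dset ?L. ?Pa x}. (Gt b W c N v x :: 'k)) = - (\<Sum>x\<in>{x\<in>Dset ?L. ?Pb x}. Gt b W c N v x)"
        by (rule disjoint_cancel)
      show ?thesis using split[of v] dc by simp
    qed
    also have "\<dots> = (\<Sum>e\<in>Sigma (blk ?L) (\<lambda>p. blk (snd p)). Hn b W c N v e)"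
      by (rule nested_reindex)
    also have "\<dots> = (\<Sum>QM\<in>blk ?L. \<Sum>im\<in>blk (snd QM). Hn b W c N v (QM, im))"
      by (simp add: sum.Sigma)
    also have "\<dots> = (\<Sum>QM\<in>blk ?L. if fst QM < c 1 \<and> c (N - 1) < fst QM + snd QM then
           (\<Sum>(i,m)\<in>blk (snd QM). if v = take (fst QM) W @ [bapp b (ins_b b i m (take (snd QM) (drop (fst QM) W)))] @ drop (fst QM + snd QM) W
             then ksign (degw (take i (take (snd QM) (drop (fst QM) W)))) else 0) else 0)"
      by (rule sum.cong[OF refl]) (auto simp: Hn_def case_prod_unfold intro!: sum.neutral sum.cong)
    finally show ?thesis .
  qed
  have "(\<lambda>v. \<Sum>QM\<in>blk ?L. if fst QM < c 1 \<and> c (N - 1) < fst QM + snd QM then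
           (\<Sum>(i,m)\<in>blk (snd QM). if v = take (fst QM) W @ [bapp b (ins_b b i m (take (snd QM) (drop (fst QM) W)))] @ drop (fst QM + snd QM) W
             then ksign (degw (take i (take (snd QM) (drop (fst QM) W)))) else (0::'k)) else 0) \<in> tnull Ob S sm"
  proof (rule tnull_sum[OF finite_blk])
    fix QM assume QM: "QM \<in> blk ?L"
    obtain Q M where qm: "QM = (Q, M)" by (cases QM)
    show "(\<lambda>v. if fst QM < c 1 \<and> c (N - 1) < fst QM + snd QM then
           (\<Sum>(i,m)\<in>blk (snd QM). if v = take (fst QM) W @ [bapp b (ins_b b i m (take (snd QM) (drop (fst QM) W)))] @ drop (fst QM + snd QM) W
             then ksign (degw (take i (take (snd QM) (drop (fst QM) W)))) else (0::'k)) else 0) \<in> tnull Ob S sm"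
    proof (cases "fst QM < c 1 \<and> c (N - 1) < fst QM + snd QM")
      case True
      then show ?thesis using nested_tnull[OF C W, of Q M] QM unfolding qm fst_conv snd_conv by simp
    next
      case False
      then show ?thesis by (intro tnull_zero') auto
    qed
  qed
  then show ?thesis by (rule tnull_cong) (simp add: red)
qed

lemma sw_end:
  assumes mono: "\<And>i j. i \<le> j \<Longrightarrow> c i \<le> (c j :: nat)" and x: "c e \<le> x" "x < c (Suc e)"
  shows "sw c x y \<longleftrightarrow> y < c (Suc e)"
proof
  assume "sw c x y" then show "y < c (Suc e)" using x by (simp add: sw_def)
next
  assume y: "y < c (Suc e)"
  show "sw c x y" unfolding sw_def
  proof (intro allI impI)
    fix j assume j: "x < c j"
    have "Suc e \<le> j"
    proof (rule ccontr)
      assume "\<not> Suc e \<le> j" then have "j \<le> e" by simp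
      then have "c j \<le> c e" by (rule mono)
      then show False using j x by simp
    qed
    then have "c (Suc e) \<le> c j" by (rule mono)
    then show "y < c j" using y by simp
  qed
qed

lemma cond_equiv:
  fixes c :: "nat \<Rightarrow> nat"
  assumes mono: "\<And>i j. i \<le> j \<Longrightarrow> c i \<le> c j" and c0: "c 0 = 0" and cN: "c N = L"
    and rn: "r + n \<le> N" "1 \<le> n"
    and q1: "c r \<le> q1" "q1 < c (Suc r)" "c (r + n - 1) < q1 + m1" "q1 + m1 \<le> c (r + n)" "1 \<le> m1"
    and q2: "q2 < L - m1 + 1" "1 \<le> m2" "q2 + m2 \<le> L - m1 + 1"
  shows "(q2 < (if r = 0 then c (r + n) - c r - m1 + 1 else c 1)
      \<and> (L - m1 + 1) - (if r + n = N then c (r + n) - c r - m1 + 1 else L - c (N - 1)) < q2 + m2)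
     \<longleftrightarrow> Cc c N q1 m1 q2 m2"
proof -
  have r0: "r = 0 \<Longrightarrow> q1 < c 1" using q1 by simp
  have r1: "r \<noteq> 0 \<Longrightarrow> c 1 \<le> c r" using mono[of 1 r] by simp
  have e1: "r + n = N \<Longrightarrow> c (N - 1) < q1 + m1" using q1 by simp
  have e2: "r + n \<noteq> N \<Longrightarrow> c (r + n) \<le> c (N - 1)" using mono[of "r + n" "N - 1"] rn by simp
  have crn: "c (r + n) \<le> L" using mono[of "r + n" N] rn cN by simp
  have sa: "sw c (q1 + m1 - 1) y \<longleftrightarrow> y < c (r + n)" for y
  proof -
    have "sw c (q1 + m1 - 1) y \<longleftrightarrow> y < c (Suc (r + n - 1))"
      by (rule sw_end[OF mono]) (use q1 rn in auto)
    then show ?thesis using rn by simp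
  qed
  have sb: "x < q1 \<Longrightarrow> sw c x q1 \<longleftrightarrow> c r \<le> x" for x
  proof
    assume "x < q1" "sw c x q1"
    show "c r \<le> x"
    proof (rule ccontr)
      assume "\<not> c r \<le> x" then have "x < c r" by simp
      then have "q1 < c r" using \<open>sw c x q1\<close> by (simp add: sw_def)
      then show False using q1 by simp
    qed
  next
    assume "x < q1" "c r \<le> x"
    then have "sw c x q1 \<longleftrightarrow> q1 < c (Suc r)" by (intro sw_end[OF mono]) (use q1 in auto)
    then show "sw c x q1" using q1 by simp
  qed
  consider (n) "q2 \<le> q1 \<and> q1 < q2 + m2" | (a) "q1 < q2" | (b) "q2 + m2 \<le> q1" by linarith
  then show ?thesis
  proof cases
    case n
    then have C: "Cc c N q1 m1 q2 m2 = (q2 < c 1 \<and> c (N - 1) < q2 + m2 + m1 - 1)" by (simp add: Cc_def)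
    show ?thesis unfolding C
      using r0 r1 e1 e2 crn n q1 q2 rn c0 cN by (cases "r = 0"; cases "r + n = N") auto
  next
    case a
    then have C: "Cc c N q1 m1 q2 m2 = (q1 < c 1 \<and> q2 + m1 - 1 < c (r + n) \<and> c (N - 1) < q2 + m2 + m1 - 1)"
      using a unfolding Cc_def sa by simp
    show ?thesis unfolding C
      using r0 r1 e1 e2 crn a q1 q2 rn c0 cN by (cases "r = 0"; cases "r + n = N") auto
  next
    case b
    then have C: "Cc c N q1 m1 q2 m2 = (q2 < c 1 \<and> c (N - 1) < q1 + m1 \<and> c r \<le> q2 + m2 - 1)"
      using sb[of "q2 + m2 - 1"] q2 by (simp add: Cc_def)
    show ?thesis unfolding C
      using r0 r1 e1 e2 crn b q1 q2 rn c0 cN by (cases "r = 0"; cases "r + n = N") auto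
  qed
qed

lemma idx_exists: "(f 0 :: nat) \<le> p \<Longrightarrow> p < f N \<Longrightarrow> \<exists>r<N. f r \<le> p \<and> p < f (Suc r)"
proof (induction N)
  case 0 then show ?case by simp
next
  case (Suc N)
  show ?case
  proof (cases "p < f N")
    case True then show ?thesis using Suc by (metis less_SucI)
  next
    case False then show ?thesis using Suc by auto
  qed
qed

lemma sum_unique:
  assumes "finite A" "x0 \<in> A" "\<And>x. x \<in> A \<Longrightarrow> x \<noteq> x0 \<Longrightarrow> f x = 0"
  shows "sum f A = f x0"
proof -
  have "sum f A = f x0 + sum f (A - {x0})" using assms by (simp add: sum.remove)
  also have "sum f (A - {x0}) = 0" using assms by (intro sum.neutral) auto
  finally show ?thesis by simp
qed

definition cc :: "('o, 'm) word list \<Rightarrow> nat \<Rightarrow> nat" where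
  "cc ws j = length (concat (take j ws))"

lemma cc_mono: "i \<le> j \<Longrightarrow> cc ws i \<le> cc ws j"
proof -
  assume "i \<le> j"
  then have "take j ws = take i ws @ take (j - i) (drop i ws)" by (metis le_add_diff_inverse take_add)
  then show ?thesis by (simp add: cc_def)
qed

lemma cc_0[simp]: "cc ws 0 = 0" by (simp add: cc_def)

lemma cc_N: "cc ws (length ws) = length (concat ws)" by (simp add: cc_def)

lemma cc_Suc: "r < length ws \<Longrightarrow> cc ws (Suc r) = cc ws r + length (ws ! r)"
  by (simp add: cc_def take_Suc_conv_app_nth)

lemma concat_split: "concat ws = concat (take r ws) @ concat (take n (drop r ws)) @ concat (drop (r + n) ws)"
proof -
  have "ws = take r ws @ take n (drop r ws) @ drop n (drop r ws)" by (simp only: append_take_drop_id)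
  then have "concat ws = concat (take r ws) @ concat (take n (drop r ws)) @ concat (drop n (drop r ws))"
    by (metis concat_append)
  then show ?thesis by (simp add: add.commute)
qed

lemma len_Win: "r + n \<le> length ws \<Longrightarrow> length (concat (take n (drop r ws))) = cc ws (r + n) - cc ws r"
proof -
  have "take (r + n) ws = take r ws @ take n (drop r ws)" by (rule take_add)
  then show ?thesis by (simp add: cc_def)
qed

lemma hd_sub: "r < length ws \<Longrightarrow> 1 \<le> n \<Longrightarrow> hd (take n (drop r ws)) = ws ! r"
  by (cases n) (auto simp: hd_drop_conv_nth)

lemma last_sub: "r + n \<le> length ws \<Longrightarrow> 1 \<le> n \<Longrightarrow> last (take n (drop r ws)) = ws ! (r + n - 1)"
proof -
  assume a: "r + n \<le> length ws" "1 \<le> n"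
  have "take n (drop r ws) \<noteq> []" using a by auto
  then have "last (take n (drop r ws)) = take n (drop r ws) ! (length (take n (drop r ws)) - 1)"
    by (simp add: last_conv_nth)
  also have "\<dots> = ws ! (r + n - 1)" using a by simp
  finally show ?thesis .
qed

lemma len_nth_cc: "r < length ws \<Longrightarrow> length (ws ! r) = cc ws (Suc r) - cc ws r"
  by (simp add: cc_Suc)

lemma slot_expand:
  assumes ne: "sub \<noteq> []"
  shows "bbar_slot b us (bbar b sub) ws' v = (\<Sum>(q,m)\<in>blk (length (concat sub)).
     if q < length (hd sub) \<and> length (concat sub) - length (last sub) < q + m
     then ksign (degw (take q (concat sub))) * bbar b (us @ [ins_b b q m (concat sub)] @ ws') v
     else (0::'k::comm_ring_1))"
proof -
  let ?Win = "concat sub"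
  let ?g = "\<lambda>p::nat \<times> nat. if fst p < length (hd sub) \<and> length ?Win - length (last sub) < fst p + snd p
     then ksign (degw (take (fst p) ?Win)) else (0::'k)"
  have "bbar_slot b us (bbar b sub) ws' v
      = (\<Sum>p\<in>blk (length ?Win). ?g p * bbar b (us @ [ins_b b (fst p) (snd p) ?Win] @ ws') v)"
    unfolding bbar_slot_def
  proof (rule supp_sum)
    show "finite (blk (length ?Win))" by simp
    fix x
    show "bbar b sub x = (\<Sum>p\<in>blk (length ?Win). if x = ins_b b (fst p) (snd p) ?Win then ?g p else 0)"
      unfolding bbar_eq[OF ne] by (rule sum.cong) auto
  qed
  also have "\<dots> = (\<Sum>(q,m)\<in>blk (length (concat sub)).
     if q < length (hd sub) \<and> length (concat sub) - length (last sub) < q + m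
     then ksign (degw (take q (concat sub))) * bbar b (us @ [ins_b b q m (concat sub)] @ ws') v
     else (0::'k))"
    by (rule sum.cong) auto
  finally show ?thesis .
qed


lemma nws_facts:
  fixes ws :: "('o, 'm) word list" and b :: "('o, 'm) word \<Rightarrow> 'm"
  assumes r: "r < length ws" and n: "1 \<le> n" "r + n \<le> length ws"
    and qm: "(q, m) \<in> blk (cc ws (r + n) - cc ws r)"
  defines "nws \<equiv> take r ws @ [ins_b b q m (concat (take n (drop r ws)))] @ drop (r + n) ws"
  shows "concat nws = ins_b b (q + cc ws r) m (concat ws)"
    and "length (concat nws) = length (concat ws) - m + 1"
    and "length (hd nws) = (if r = 0 then cc ws (r + n) - cc ws r - m + 1 else cc ws 1)"
    and "length (last nws) = (if r + n = length ws then cc ws (r + n) - cc ws r - m + 1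
           else length (concat ws) - cc ws (length ws - 1))"
    and "nws \<noteq> []"
proof -
  let ?pre = "concat (take r ws)"
  let ?Win = "concat (take n (drop r ws))"
  let ?post = "concat (drop (r + n) ws)"
  have WS: "concat ws = ?pre @ ?Win @ ?post" by (rule concat_split)
  have lpre: "length ?pre = cc ws r" by (simp add: cc_def)
  have lWin: "length ?Win = cc ws (r + n) - cc ws r" using len_Win[OF n(2)] .
  have qm': "q < length ?Win" "1 \<le> m" "q + m \<le> length ?Win" using qm lWin by (auto simp: blk_def)
  have mono: "cc ws r \<le> cc ws (r + n)" "cc ws (r + n) \<le> length (concat ws)"
    using cc_mono[of r "r + n" ws] cc_mono[of "r + n" "length ws" ws] n by (auto simp: cc_N)
  have cn: "concat nws = ?pre @ ins_b b q m ?Win @ ?post" by (simp add: nws_def)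
  also have "\<dots> = ins_b b (q + cc ws r) m (concat ws)"
    unfolding WS using ins_b_append_left[of b ?pre q m "?Win @ ?post"] ins_b_append_right[of q m ?Win b ?post] qm' lpre
    by (simp add: add.commute)
  finally show c1: "concat nws = ins_b b (q + cc ws r) m (concat ws)" .
  show "length (concat nws) = length (concat ws) - m + 1"
    unfolding c1 using qm' lWin mono by (intro length_ins_b) auto
  have lins: "length (ins_b b q m ?Win) = cc ws (r + n) - cc ws r - m + 1"
    using length_ins_b[of q m ?Win b] qm' lWin by simp
  show "length (hd nws) = (if r = 0 then cc ws (r + n) - cc ws r - m + 1 else cc ws 1)"
  proof (cases "r = 0")
    case True then show ?thesis using lins by (simp add: nws_def)
  next
    case False
    then have "hd nws = ws ! 0" using r by (simp add: nws_def hd_conv_nth nth_append)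
    moreover have "length (ws ! 0) = cc ws 1" using len_nth_cc[of 0 ws] r by fastforce
    ultimately show ?thesis using False by simp
  qed
  show "length (last nws) = (if r + n = length ws then cc ws (r + n) - cc ws r - m + 1
           else length (concat ws) - cc ws (length ws - 1))"
  proof (cases "r + n = length ws")
    case True then show ?thesis using lins by (simp add: nws_def)
  next
    case False
    then have dne: "drop (r + n) ws \<noteq> []" using n by simp
    then have "last nws = last (drop (r + n) ws)" by (simp add: nws_def)
    also have "\<dots> = last ws" using dne by simp
    also have "\<dots> = ws ! (length ws - 1)" using r by (intro last_conv_nth) auto
    finally have "length (last nws) = cc ws (Suc (length ws - 1)) - cc ws (length ws - 1)"
      using len_nth_cc[of "length ws - 1" ws] r by simp
    moreover have "Suc (length ws - 1) = length ws" using r by simp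
    ultimately show ?thesis using False by (simp add: cc_N)
  qed
  show "nws \<noteq> []" by (simp add: nws_def)
qed


definition CO :: "('o, 'm) word list \<Rightarrow> nat \<Rightarrow> nat \<Rightarrow> nat \<Rightarrow> nat \<Rightarrow> nat \<Rightarrow> bool" where
  "CO ws r n m1 q2 m2 = (q2 < (if r = 0 then cc ws (r + n) - cc ws r - m1 + 1 else cc ws 1)
     \<and> (length (concat ws) - m1 + 1) - (if r + n = length ws then cc ws (r + n) - cc ws r - m1 + 1
          else length (concat ws) - cc ws (length ws - 1)) < q2 + m2)"

definition Th :: "('o, 'm) word list \<Rightarrow> (('o, 'm) word \<Rightarrow> 'm) \<Rightarrow> ('o, 'm) word \<Rightarrow> nat \<Rightarrow> nat \<Rightarrow> nat \<Rightarrow> nat \<Rightarrow> 'k::comm_ring_1" where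
  "Th ws b v r n q1 m1 = (if cc ws r \<le> q1 \<and> q1 < cc ws (Suc r) \<and> cc ws (r + n - 1) < q1 + m1 \<and> q1 + m1 \<le> cc ws (r + n) then
     (\<Sum>(q2, m2)\<in>blk (length (concat ws) - m1 + 1).
        if CO ws r n m1 q2 m2 \<and> v = ins_b b q2 m2 (ins_b b q1 m1 (concat ws))
        then ksign (degw (take q1 (concat ws))) * ksign (degw (take q2 (ins_b b q1 m1 (concat ws)))) else 0)
     else 0)"

lemma phi_eq:
  fixes ws :: "('o, 'm) word list" and b :: "('o, 'm) word \<Rightarrow> 'm"
  assumes r: "r < length ws" and n: "1 \<le> n" "r + n \<le> length ws"
  shows "(ksign (degw (concat (take r ws))) :: 'k::comm_ring_1)
      * bbar_slot b (take r ws) (bbar b (take n (drop r ws))) (drop (r + n) ws) v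
    = (\<Sum>(q1, m1)\<in>blk (length (concat ws)). Th ws b v r n q1 m1)"
proof -
  let ?pre = "concat (take r ws)"
  let ?sub = "take n (drop r ws)"
  let ?Win = "concat (take n (drop r ws))"
  let ?post = "concat (drop (r + n) ws)"
  let ?W = "concat ws"
  let ?L = "length (concat ws)"
  let ?c = "cc ws"
  let ?nws = "\<lambda>q m. take r ws @ [ins_b b q m ?Win] @ drop (r + n) ws"
  have ne: "?sub \<noteq> []" using r n by simp
  have WS: "?W = ?pre @ ?Win @ ?post" by (rule concat_split)
  have lpre: "length ?pre = ?c r" by (simp add: cc_def)
  have lWin: "length ?Win = ?c (r + n) - ?c r" using len_Win[OF n(2)] .
  have lhd: "length (hd ?sub) = ?c (Suc r) - ?c r" using hd_sub[OF r n(1)] len_nth_cc[OF r] by simp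
  have llast: "length (last ?sub) = ?c (r + n) - ?c (r + n - 1)"
  proof -
    have "length (ws ! (r + n - 1)) = ?c (Suc (r + n - 1)) - ?c (r + n - 1)"
      using n by (intro len_nth_cc) auto
    then show ?thesis using last_sub[OF n(2,1)] n by simp
  qed
  have m1: "?c r \<le> ?c (Suc r)" "?c r \<le> ?c (r + n - 1)" "?c (r + n - 1) \<le> ?c (r + n)" "?c (r + n) \<le> ?L"
    using cc_mono[of r "Suc r" ws] cc_mono[of r "r + n - 1" ws] cc_mono[of "r + n - 1" "r + n" ws]
      cc_mono[of "r + n" "length ws" ws] n by (auto simp: cc_N)
  define h :: "nat \<Rightarrow> nat \<Rightarrow> 'k" where "h q1 m1 = Th ws b v r n q1 m1" for q1 m1
  have "(ksign (degw ?pre) :: 'k) * bbar_slot b (take r ws) (bbar b ?sub) (drop (r + n) ws) v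
     = (\<Sum>(q, m)\<in>blk (length ?Win). ksign (degw ?pre) *
         (if q < length (hd ?sub) \<and> length ?Win - length (last ?sub) < q + m
          then ksign (degw (take q ?Win)) * bbar b (?nws q m) v else 0))"
    unfolding slot_expand[OF ne] by (simp add: sum_distrib_left case_prod_unfold)
  also have "\<dots> = (\<Sum>(q, m)\<in>blk (?c (r + n) - ?c r). h (q + ?c r) m)"
    unfolding lWin
  proof (rule sum.cong[OF refl], clarify)
    fix q m assume qm: "(q, m) \<in> blk (?c (r + n) - ?c r)"
    have qm': "q < ?c (r + n) - ?c r" "1 \<le> m" "q + m \<le> ?c (r + n) - ?c r" using qm by (auto simp: blk_def)
    have condeq: "(q < length (hd ?sub) \<and> ?c (r + n) - ?c r - length (last ?sub) < q + m)
       \<longleftrightarrow> (?c r \<le> q + ?c r \<and> q + ?c r < ?c (Suc r) \<and> ?c (r + n - 1) < q + ?c r + m \<and> q + ?c r + m \<le> ?c (r + n))"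
      unfolding lhd llast using m1 qm' by auto
    note nf = nws_facts[OF r n qm, of b]
    have tk: "take (q + ?c r) ?W = ?pre @ take q ?Win"
      unfolding WS using lpre lWin qm' by (simp add: add.commute)
    have bb: "bbar b (?nws q m) v = (\<Sum>(q2, m2)\<in>blk (?L - m + 1).
        if CO ws r n m q2 m2 \<and> v = ins_b b q2 m2 (ins_b b (q + ?c r) m ?W)
        then ksign (degw (take q2 (ins_b b (q + ?c r) m ?W))) else 0)"
      unfolding bbar_eq[OF nf(5)] nf(2) unfolding nf(3) nf(4) nf(1) CO_def by (simp only: conj_assoc)
    show "(ksign (degw ?pre) :: 'k) *
         (if q < length (hd ?sub) \<and> ?c (r + n) - ?c r - length (last ?sub) < q + m
          then ksign (degw (take q ?Win)) * bbar b (?nws q m) v else 0) = h (q + ?c r) m"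
    proof (cases "q < length (hd ?sub) \<and> ?c (r + n) - ?c r - length (last ?sub) < q + m")
      case True
      then have T2: "?c r \<le> q + ?c r \<and> q + ?c r < ?c (Suc r) \<and> ?c (r + n - 1) < q + ?c r + m \<and> q + ?c r + m \<le> ?c (r + n)"
        using condeq by blast
      have "(ksign (degw ?pre) :: 'k) * (ksign (degw (take q ?Win)) * bbar b (?nws q m) v)
          = ksign (degw (take (q + ?c r) ?W)) * bbar b (?nws q m) v"
        unfolding tk by (simp add: ksign_add)
      also have "\<dots> = h (q + ?c r) m"
        unfolding h_def Th_def bb using T2 by (simp add: sum_distrib_left case_prod_unfold if_distrib cong: if_cong)
      finally show ?thesis by (simp only: True if_True simp_thms)
    next
      case False
      then have "\<not> (?c r \<le> q + ?c r \<and> q + ?c r < ?c (Suc r) \<and> ?c (r + n - 1) < q + ?c r + m \<and> q + ?c r + m \<le> ?c (r + n))"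
        using condeq by blast
      then have h0: "h (q + ?c r) m = 0" unfolding h_def Th_def by auto
      show ?thesis unfolding h0 by (simp only: False if_False mult_zero_right simp_thms)
    qed
  qed
  also have "\<dots> = (\<Sum>(q1, m1)\<in>blk ?L. if ?c r \<le> q1 \<and> q1 + m1 \<le> ?c r + (?c (r + n) - ?c r) then h q1 m1 else 0)"
    by (rule shift_sum) (use m1 in auto)
  also have "\<dots> = (\<Sum>(q1, m1)\<in>blk ?L. h q1 m1)"
    by (rule sum.cong[OF refl]) (use m1 in \<open>auto simp: h_def Th_def\<close>)
  finally show ?thesis by (simp add: h_def)
qed

lemma interval_unique:
  fixes c :: "nat \<Rightarrow> nat"
  assumes mono: "\<And>i j. i \<le> j \<Longrightarrow> c i \<le> c j"
    and "c r \<le> p" "p < c (Suc r)" "c r' \<le> p" "p < c (Suc r')"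
  shows "r = r'"
proof (rule ccontr)
  assume "r \<noteq> r'"
  then consider "Suc r \<le> r'" | "Suc r' \<le> r" by linarith
  then show False
  proof cases
    case 1 then have "c (Suc r) \<le> c r'" by (rule mono)
    then show False using assms by simp
  next
    case 2 then have "c (Suc r') \<le> c r" by (rule mono)
    then show False using assms by simp
  qed
qed

lemma collapse_eq:
  fixes ws :: "('o, 'm) word list" and b :: "('o, 'm) word \<Rightarrow> 'm"
  assumes ne: "ws \<noteq> []" and qm: "(q1, m1) \<in> blk (length (concat ws))"
  shows "(\<Sum>(r, n)\<in>Sigma {..<length ws} (\<lambda>r. {1..length ws - r}). (Th ws b v r n q1 m1 :: 'k::comm_ring_1))
    = (\<Sum>(q2, m2)\<in>blk (length (concat ws) - m1 + 1). Gt b (concat ws) (cc ws) (length ws) v ((q1, m1), (q2, m2)))"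
proof -
  let ?N = "length ws"
  let ?L = "length (concat ws)"
  let ?c = "cc ws"
  let ?RN = "Sigma {..<?N} (\<lambda>r. {1..?N - r})"
  have mono: "\<And>i j. i \<le> j \<Longrightarrow> ?c i \<le> ?c j" by (rule cc_mono)
  have cN: "?c ?N = ?L" by (rule cc_N)
  have qm': "q1 < ?L" "1 \<le> m1" "q1 + m1 \<le> ?L" using qm by (auto simp: blk_def)
  obtain r0 where r0: "r0 < ?N" "?c r0 \<le> q1" "q1 < ?c (Suc r0)"
    using idx_exists[of ?c q1 ?N] qm' cN by auto
  have lt: "q1 + m1 - 1 < ?c ?N" using qm' cN by simp
  obtain e where e: "e < ?N" "?c e \<le> q1 + m1 - 1" "q1 + m1 - 1 < ?c (Suc e)"
    using idx_exists[of ?c "q1 + m1 - 1" ?N, OF _ lt] by auto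
  have r0e: "r0 \<le> e"
  proof (rule ccontr)
    assume "\<not> r0 \<le> e" then have "Suc e \<le> r0" by simp
    then have "?c (Suc e) \<le> ?c r0" by (rule mono)
    then show False using r0 e qm' by simp
  qed
  define n0 where "n0 = Suc e - r0"
  have n0: "1 \<le> n0" "r0 + n0 \<le> ?N" "r0 + n0 = Suc e" "r0 + n0 - 1 = e" using r0e e by (auto simp: n0_def)
  have P0: "?c r0 \<le> q1 \<and> q1 < ?c (Suc r0) \<and> ?c (r0 + n0 - 1) < q1 + m1 \<and> q1 + m1 \<le> ?c (r0 + n0)"
    using r0 e n0 qm' by auto
  have mem: "(r0, n0) \<in> ?RN" using r0 n0 by auto
  have "(\<Sum>(r, n)\<in>?RN. (Th ws b v r n q1 m1 :: 'k)) = (case (r0, n0) of (r, n) \<Rightarrow> Th ws b v r n q1 m1)"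
  proof (rule sum_unique[OF _ mem])
    show "finite ?RN" by simp
    fix x assume x: "x \<in> ?RN" "x \<noteq> (r0, n0)"
    obtain r n where xe: "x = (r, n)" by (cases x)
    have rn: "r < ?N" "1 \<le> n" "r + n \<le> ?N" using x xe by auto
    show "(case x of (r, n) \<Rightarrow> Th ws b v r n q1 m1) = (0::'k)"
    proof (cases "?c r \<le> q1 \<and> q1 < ?c (Suc r) \<and> ?c (r + n - 1) < q1 + m1 \<and> q1 + m1 \<le> ?c (r + n)")
      case True
      have "r = r0" using interval_unique[where c="cc ws" and r=r and p=q1 and r'=r0, OF mono] True r0 by blast
      moreover have "r + n - 1 = e"
        using interval_unique[where c="cc ws" and r="r + n - 1" and p="q1 + m1 - 1" and r'=e, OF mono] True e rn by auto
      ultimately have "x = (r0, n0)" using xe n0 rn by auto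
      then show ?thesis using x by simp
    next
      case False then show ?thesis unfolding xe Th_def by auto
    qed
  qed
  also have "\<dots> = Th ws b v r0 n0 q1 m1" by simp
  also have "\<dots> = (\<Sum>(q2, m2)\<in>blk (?L - m1 + 1). Gt b (concat ws) ?c ?N v ((q1, m1), (q2, m2)))"
    unfolding Th_def using P0
  proof (simp only: if_True simp_thms, intro sum.cong refl, clarify)
    fix q2 m2 assume q2: "(q2, m2) \<in> blk (?L - m1 + 1)"
    have "CO ws r0 n0 m1 q2 m2 \<longleftrightarrow> Cc ?c ?N q1 m1 q2 m2"
      unfolding CO_def
      by (rule cond_equiv[OF mono]) (use cN n0 r0 P0 q2 qm' in \<open>auto simp: blk_def\<close>)
    then show "(if CO ws r0 n0 m1 q2 m2 \<and> v = ins_b b q2 m2 (ins_b b q1 m1 (concat ws))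
          then ksign (degw (take q1 (concat ws))) * ksign (degw (take q2 (ins_b b q1 m1 (concat ws)))) else (0::'k))
        = Gt b (concat ws) ?c ?N v ((q1, m1), (q2, m2))"
      by (simp add: Gt_def)
  qed
  finally show ?thesis .
qed

lemma F_eq_G:
  fixes ws :: "('o, 'm) word list" and b :: "('o, 'm) word \<Rightarrow> 'm"
  assumes ne: "ws \<noteq> []"
  shows "(\<Sum>r<length ws. \<Sum>n\<in>{1..length ws - r}. (ksign (degw (concat (take r ws))) :: 'k::comm_ring_1)
            * bbar_slot b (take r ws) (bbar b (take n (drop r ws))) (drop (r + n) ws) v)
    = (\<Sum>x\<in>Dset (length (concat ws)). Gt b (concat ws) (cc ws) (length ws) v x)"
proof -
  let ?N = "length ws"
  let ?L = "length (concat ws)"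
  let ?RN = "Sigma {..<?N} (\<lambda>r. {1..?N - r})"
  have "(\<Sum>r<?N. \<Sum>n\<in>{1..?N - r}. (ksign (degw (concat (take r ws))) :: 'k)
            * bbar_slot b (take r ws) (bbar b (take n (drop r ws))) (drop (r + n) ws) v)
      = (\<Sum>r<?N. \<Sum>n\<in>{1..?N - r}. \<Sum>(q1, m1)\<in>blk ?L. (Th ws b v r n q1 m1 :: 'k))"
    by (intro sum.cong refl phi_eq) auto
  also have "\<dots> = (\<Sum>(r, n)\<in>?RN. \<Sum>(q1, m1)\<in>blk ?L. (Th ws b v r n q1 m1 :: 'k))"
    by (rule sum.Sigma) auto
  also have "\<dots> = (\<Sum>(q1, m1)\<in>blk ?L. \<Sum>(r, n)\<in>?RN. (Th ws b v r n q1 m1 :: 'k))"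
    unfolding case_prod_unfold by (rule sum.swap)
  also have "\<dots> = (\<Sum>(q1, m1)\<in>blk ?L. \<Sum>(q2, m2)\<in>blk (?L - m1 + 1). Gt b (concat ws) (cc ws) ?N v ((q1, m1), (q2, m2)))"
    by (intro sum.cong refl) (clarify, rule collapse_eq[OF ne])
  also have "\<dots> = (\<Sum>x\<in>Dset ?L. Gt b (concat ws) (cc ws) ?N v x)"
    unfolding Dset_def by (simp add: sum.Sigma case_prod_unfold)
  finally show ?thesis .
qed

lemma wf_concat_aux:
  "ws \<noteq> [] \<Longrightarrow> (\<forall>w\<in>set ws. wf_word Ob S w) \<Longrightarrow>
   (\<forall>i. Suc i < length ws \<longrightarrow> etgt (last (ws ! i)) = esrc (hd (ws ! Suc i))) \<Longrightarrow>
   wf_word Ob S (concat ws)"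
proof (induction ws)
  case Nil then show ?case by simp
next
  case (Cons w ws)
  show ?case
  proof (cases "ws = []")
    case True then show ?thesis using Cons by simp
  next
    case False
    have wfw: "wf_word Ob S w" using Cons by simp
    have IH: "wf_word Ob S (concat ws)"
    proof (rule Cons.IH[OF False])
      show "\<forall>w\<in>set ws. wf_word Ob S w" using Cons by simp
      show "\<forall>i. Suc i < length ws \<longrightarrow> etgt (last (ws ! i)) = esrc (hd (ws ! Suc i))"
        using Cons.prems(3) by (metis Suc_less_eq length_Cons nth_Cons_Suc)
    qed
    have wne: "w \<noteq> []" using wfw by (simp add: wf_word_def)
    have cne: "concat ws \<noteq> []" using IH by (simp add: wf_word_def)
    have h0: "hd ws \<noteq> []" using False Cons.prems(2) by (cases ws) (auto simp: wf_word_def)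
    have "hd (concat ws) = hd (hd ws)" using False h0 by (cases ws) auto
    moreover have "etgt (last w) = esrc (hd (ws ! 0))" using Cons.prems(3)[rule_format, of 0] False by simp
    moreover have "ws ! 0 = hd ws" using False by (simp add: hd_conv_nth)
    ultimately have "etgt (last w) = esrc (hd (concat ws))" by simp
    then show ?thesis using wf_append[OF wne cne] wfw IH by simp
  qed
qed

lemma wf_concat: "composable Ob S ws \<Longrightarrow> wf_word Ob S (concat ws)"
  unfolding composable_def by (rule wf_concat_aux) auto

theorem proposition2p2:
  fixes Ob B :: "'o set"
    and S :: "'o \<Rightarrow> 'o \<Rightarrow> int \<Rightarrow> 'm::ab_group_add set"
    and sm :: "'k::comm_ring_1 \<Rightarrow> 'm \<Rightarrow> 'm"
    and b :: "('o, 'm) word \<Rightarrow> 'm"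
  assumes C: "ainf_cat Ob S sm b"
    and B: "B \<subseteq> Ob"
  shows
    "(\<forall>ws. composable Ob S ws \<and> length ws \<ge> 2 \<longrightarrow>
        (\<lambda>v. (bbar b ws v :: 'k)
           - (bbar b [concat ws] v
              - ksign (degw (hd ws)) * embed (hd ws) (bbar b [concat (tl ws)]) [] v
              - embed [] (bbar b [concat (butlast ws)]) (last ws) v
              + (if length ws \<ge> 3
                 then ksign (degw (hd ws)) * embed (hd ws) (bbar b [concat (butlast (tl ws))]) (last ws) v
                 else 0))) \<in> tnull Ob S sm)
   \<and> (\<forall>ws. composable Ob S ws \<longrightarrow>
        (\<lambda>v. \<Sum>r<length ws. \<Sum>n\<in>{1..length ws - r}.
            (ksign (degw (concat (take r ws))) :: 'k)
              * bbar_slot b (take r ws) (bbar b (take n (drop r ws))) (drop (r + n) ws) v)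
          \<in> tnull Ob S sm)
   \<and> (\<forall>ws. composable Ob S ws \<and> (\<forall>w\<in>set ws. Dword B w) \<longrightarrow>
        (\<exists>g :: ('o, 'm) word \<Rightarrow> 'k. (\<forall>v. g v \<noteq> 0 \<longrightarrow> Dword B v)
            \<and> (\<lambda>v. bbar b ws v - g v) \<in> tnull Ob S sm))"
proof (intro conjI allI impI)
  fix ws :: "('o, 'm) word list"
  assume "composable Ob S ws \<and> length ws \<ge> 2"
  then have len: "length ws \<ge> 2" by simp
  show "(\<lambda>v. (bbar b ws v :: 'k)
           - (bbar b [concat ws] v
              - ksign (degw (hd ws)) * embed (hd ws) (bbar b [concat (tl ws)]) [] v
              - embed [] (bbar b [concat (butlast ws)]) (last ws) v
              + (if length ws \<ge> 3
                 then ksign (degw (hd ws)) * embed (hd ws) (bbar b [concat (butlast (tl ws))]) (last ws) v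
                 else 0))) \<in> tnull Ob S sm"
    by (rule part1[OF len])
next
  fix ws :: "('o, 'm) word list"
  assume cws: "composable Ob S ws"
  have ne: "ws \<noteq> []" using cws by (simp add: composable_def)
  have W: "wf_word Ob S (concat ws)" by (rule wf_concat[OF cws])
  have "(\<lambda>v. \<Sum>x\<in>Dset (length (concat ws)). (Gt b (concat ws) (cc ws) (length ws) v x :: 'k)) \<in> tnull Ob S sm"
    by (rule G_tnull[OF C W])
  then show "(\<lambda>v. \<Sum>r<length ws. \<Sum>n\<in>{1..length ws - r}.
            (ksign (degw (concat (take r ws))) :: 'k)
              * bbar_slot b (take r ws) (bbar b (take n (drop r ws))) (drop (r + n) ws) v)
          \<in> tnull Ob S sm"
    by (rule tnull_cong) (rule F_eq_G[OF ne, symmetric])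
next
  fix ws :: "('o, 'm) word list"
  assume a: "composable Ob S ws \<and> (\<forall>w\<in>set ws. Dword B w)"
  show "\<exists>g :: ('o, 'm) word \<Rightarrow> 'k. (\<forall>v. g v \<noteq> 0 \<longrightarrow> Dword B v)
            \<and> (\<lambda>v. bbar b ws v - g v) \<in> tnull Ob S sm"
  proof (intro exI conjI allI impI)
    fix v assume "(bbar b ws v :: 'k) \<noteq> 0"
    then show "Dword B v" using part3[of Ob S ws B b v] a by blast
  next
    show "(\<lambda>v. (bbar b ws v :: 'k) - bbar b ws v) \<in> tnull Ob S sm" by (rule tnull_zero') simp
  qed
qed

end
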